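(* Let $S$ be a regular semigroup with set of idempotents $E$, and let $e\in E$. Suppose the connected component of $e$ in $\mathcal G(E)$ (the set of idempotents joined to $e$ by an $E$-path) is finite, containing $k$ idempotents, which lie in $m$ distinct $\mathcal R$-classes and $n$ distinct $\mathcal L$-classes. Then $\mathcal G(E)(e,e)$ is a free group of rank $k-(m+n)+1$.
   Context: For idempotents $e,f$: $e\,\mathcal R\,f$ iff $ef=f,\ fe=e$; $e\,\mathcal L\,f$ iff $ef=e,\ fe=f$. An $E$-path is a sequence $(e_1,\dots,e_n)$ of idempotents with $e_i\,(\mathcal R\cup\mathcal L)\,e_{i+1}$ for all $i$. A vertex $e_i$ ($1<i<n$) is inessential if $e_{i-1}\,\mathcal R\,e_i\,\mathcal R\,e_{i+1}$ or $e_{i-1}\,\mathcal L\,e_i\,\mathcal L\,e_{i+1}$; an $E$-chain is an equivalence class of $E$-paths under the equivalence generated by inserting or deleting inessential vertices. $\mathcal G(E)$ is the groupoid with object set $E$ whose morphisms from $e$ to $f$ are $E$-chains from $e$ to $f$, composed by concatenation and inverted by reversal; $\mathcal G(E)(e,e)$ denotes the group of morphisms from $e$ to $e$. *)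

theory Defs
  imports "HOL-Algebra.Algebra"
begin

definition regular_semigroup :: "'a::semigroup_mult itself \<Rightarrow> bool" where
  "regular_semigroup _ \<longleftrightarrow> (\<forall>a::'a. \<exists>x. a * x * a = a)"

definition idems :: "'a::semigroup_mult set" where
  "idems = {x. x * x = x}"

definition Rrel :: "'a::semigroup_mult \<Rightarrow> 'a \<Rightarrow> bool" where
  "Rrel e f \<longleftrightarrow> e * f = f \<and> f * e = e"

definition Lrel :: "'a::semigroup_mult \<Rightarrow> 'a \<Rightarrow> bool" where
  "Lrel e f \<longleftrightarrow> e * f = e \<and> f * e = f"

definition epath :: "'a::semigroup_mult list \<Rightarrow> bool" where
  "epath p \<longleftrightarrow> p \<noteq> [] \<and> set p \<subseteq> idems \<and>
     (\<forall>i. Suc i < length p \<longrightarrow> Rrel (p ! i) (p ! Suc i) \<or> Lrel (p ! i) (p ! Suc i))"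

text \<open>One elementary step: deletion of an inessential vertex, or (to identify the
  path (e,e) with the trivial path (e)) deletion of a repeated consecutive vertex.\<close>
definition ess_step :: "('a::semigroup_mult list \<times> 'a list) set" where
  "ess_step =
     {(p, q). epath p \<and> epath q \<and>
        ((\<exists>xs a b c ys. p = xs @ [a, b, c] @ ys \<and> q = xs @ [a, c] @ ys \<and>
            ((Rrel a b \<and> Rrel b c) \<or> (Lrel a b \<and> Lrel b c))) \<or>
         (\<exists>xs a ys. p = xs @ [a, a] @ ys \<and> q = xs @ [a] @ ys))}"

definition chain_equiv :: "('a::semigroup_mult list \<times> 'a list) set" where
  "chain_equiv = {(p, q). epath p \<and> epath q \<and> (p, q) \<in> (ess_step \<union> ess_step\<inverse>)\<^sup>*}"

definition echains :: "'a::semigroup_mult \<Rightarrow> 'a \<Rightarrow> 'a list set set" where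
  "echains e f = {chain_equiv `` {p} | p. epath p \<and> hd p = e \<and> last p = f}"

definition chain_mult :: "'a::semigroup_mult list set \<Rightarrow> 'a list set \<Rightarrow> 'a list set" where
  "chain_mult A B = chain_equiv `` {(SOME p. p \<in> A) @ tl (SOME q. q \<in> B)}"

definition vertex_group :: "'a::semigroup_mult \<Rightarrow> 'a list set monoid" where
  "vertex_group e = \<lparr>carrier = echains e e, monoid.mult = chain_mult, one = chain_equiv `` {[e]}\<rparr>"

definition component :: "'a::semigroup_mult \<Rightarrow> 'a set" where
  "component e = {f. \<exists>p. epath p \<and> hd p = e \<and> last p = f}"

definition Rclass :: "'a::semigroup_mult \<Rightarrow> 'a set" where
  "Rclass f = {g \<in> idems. Rrel f g}"

definition Lclass :: "'a::semigroup_mult \<Rightarrow> 'a set" where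
  "Lclass f = {g \<in> idems. Lrel f g}"

fun eval_word :: "('g, 'm) monoid_scheme \<Rightarrow> (bool \<times> 'g) list \<Rightarrow> 'g" where
  "eval_word G [] = \<one>\<^bsub>G\<^esub>"
| "eval_word G ((b, x) # w) = (if b then x else inv\<^bsub>G\<^esub> x) \<otimes>\<^bsub>G\<^esub> eval_word G w"

definition reduced_word :: "(bool \<times> 'g) list \<Rightarrow> bool" where
  "reduced_word w \<longleftrightarrow> (\<forall>i. Suc i < length w \<longrightarrow>
      \<not> (snd (w ! i) = snd (w ! Suc i) \<and> fst (w ! i) \<noteq> fst (w ! Suc i)))"

definition free_basis :: "('g, 'm) monoid_scheme \<Rightarrow> 'g set \<Rightarrow> bool" where
  "free_basis G B \<longleftrightarrow> B \<subseteq> carrier G \<and> generate G B = carrier G \<and>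
     (\<forall>w. w \<noteq> [] \<and> set (map snd w) \<subseteq> B \<and> reduced_word w \<longrightarrow> eval_word G w \<noteq> one G)"

definition free_group_of_rank :: "('g, 'm) monoid_scheme \<Rightarrow> nat \<Rightarrow> bool" where
  "free_group_of_rank G r \<longleftrightarrow> group G \<and> (\<exists>B. finite B \<and> card B = r \<and> free_basis G B)"

end

theory Submission
  imports Defs
begin

abbreviation rel :: "'a::semigroup_mult \<Rightarrow> 'a \<Rightarrow> bool" where "rel a b \<equiv> Rrel a b \<or> Lrel a b"

lemma Rrel_sym: "Rrel a b \<Longrightarrow> Rrel b a" by (simp add: Rrel_def)
lemma Lrel_sym: "Lrel a b \<Longrightarrow> Lrel b a" by (simp add: Lrel_def)
lemma Rrel_trans: "Rrel a b \<Longrightarrow> Rrel b c \<Longrightarrow> Rrel a c"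
  unfolding Rrel_def
proof -
  assume H: "a * b = b \<and> b * a = a" "b * c = c \<and> c * b = b"
  have "a * c = c"
  proof -
    have "a * c = a * (b * c)" using H by simp
    also have "\<dots> = (a * b) * c" by (simp add: mult.assoc)
    also have "\<dots> = c" using H by simp
    finally show ?thesis .
  qed
  moreover have "c * a = a"
  proof -
    have "c * a = c * (b * a)" using H by simp
    also have "\<dots> = (c * b) * a" by (simp add: mult.assoc)
    also have "\<dots> = a" using H by simp
    finally show ?thesis .
  qed
  ultimately show "a * c = c \<and> c * a = a" by simp
qed
lemma Lrel_trans: "Lrel a b \<Longrightarrow> Lrel b c \<Longrightarrow> Lrel a c"
  unfolding Lrel_def
proof -
  assume H: "a * b = a \<and> b * a = b" "b * c = b \<and> c * b = c"
  have "a * c = a"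
  proof -
    have "a * c = (a * b) * c" using H by simp
    also have "\<dots> = a * (b * c)" by (simp add: mult.assoc)
    also have "\<dots> = a" using H by simp
    finally show ?thesis .
  qed
  moreover have "c * a = c"
  proof -
    have "c * a = (c * b) * a" using H by simp
    also have "\<dots> = c * (b * a)" by (simp add: mult.assoc)
    also have "\<dots> = c" using H by simp
    finally show ?thesis .
  qed
  ultimately show "a * c = a \<and> c * a = c" by simp
qed
lemma RL_eq: "Rrel a b \<Longrightarrow> Lrel a b \<Longrightarrow> a = b"
proof -
  assume H: "Rrel a b" "Lrel a b"
  from H(1) have 1: "a * b = b" unfolding Rrel_def by (rule conjunct1)
  from H(2) have 2: "a * b = a" unfolding Lrel_def by (rule conjunct1)
  show "a = b" using trans[OF 2[symmetric] 1] .
qed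
lemma Rrel_refl: "a \<in> idems \<Longrightarrow> Rrel a a" by (simp add: Rrel_def idems_def)
lemma Lrel_refl: "a \<in> idems \<Longrightarrow> Lrel a a" by (simp add: Lrel_def idems_def)
lemma rel_sym: "rel a b \<Longrightarrow> rel b a" using Rrel_sym Lrel_sym by blast

lemma Rclass_eq: "a \<in> idems \<Longrightarrow> b \<in> idems \<Longrightarrow> Rclass a = Rclass b \<longleftrightarrow> Rrel a b"
proof
  assume "b \<in> idems" "Rclass a = Rclass b"
  then have "b \<in> Rclass a" using Rrel_refl[of b] unfolding Rclass_def by auto
  then show "Rrel a b" unfolding Rclass_def by simp
next
  assume H: "Rrel a b"
  have "Rrel a g \<longleftrightarrow> Rrel b g" for g
    using Rrel_trans[OF H, of g] Rrel_trans[OF Rrel_sym[OF H], of g] by blast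
  then show "Rclass a = Rclass b" unfolding Rclass_def by auto
qed
lemma Lclass_eq: "a \<in> idems \<Longrightarrow> b \<in> idems \<Longrightarrow> Lclass a = Lclass b \<longleftrightarrow> Lrel a b"
proof
  assume "b \<in> idems" "Lclass a = Lclass b"
  then have "b \<in> Lclass a" using Lrel_refl[of b] unfolding Lclass_def by auto
  then show "Lrel a b" unfolding Lclass_def by simp
next
  assume H: "Lrel a b"
  have "Lrel a g \<longleftrightarrow> Lrel b g" for g
    using Lrel_trans[OF H, of g] Lrel_trans[OF Lrel_sym[OF H], of g] by blast
  then show "Lclass a = Lclass b" unfolding Lclass_def by auto
qed

fun ep :: "'a::semigroup_mult list \<Rightarrow> bool" where
  "ep [] = False"
| "ep [a] = (a \<in> idems)"
| "ep (a # b # w) = (a \<in> idems \<and> rel a b \<and> ep (b # w))"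

lemma epath_Cons2: "epath (a # b # w) \<longleftrightarrow> a \<in> idems \<and> rel a b \<and> epath (b # w)"
proof -
  have "(\<forall>i. Suc i < length (a # b # w) \<longrightarrow> rel ((a # b # w) ! i) ((a # b # w) ! Suc i)) \<longleftrightarrow>
        rel a b \<and> (\<forall>i. Suc i < length (b # w) \<longrightarrow> rel ((b # w) ! i) ((b # w) ! Suc i))"
    (is "?L \<longleftrightarrow> ?R")
  proof
    assume L: ?L
    have "rel a b" using spec[OF L, of 0] by simp
    moreover have "\<forall>i. Suc i < length (b # w) \<longrightarrow> rel ((b # w) ! i) ((b # w) ! Suc i)"
    proof (intro allI impI)
      fix i assume "Suc i < length (b # w)"
      then show "rel ((b # w) ! i) ((b # w) ! Suc i)" using spec[OF L, of "Suc i"] by simp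
    qed
    ultimately show ?R by blast
  next
    assume R: ?R
    show ?L
    proof (intro allI impI)
      fix i assume "Suc i < length (a # b # w)"
      then show "rel ((a # b # w) ! i) ((a # b # w) ! Suc i)"
        using R by (cases i) auto
    qed
  qed
  then show ?thesis unfolding epath_def by auto
qed

lemma epath_ep[simp]: "epath p = ep p"
proof (induction p rule: ep.induct)
  case 1 then show ?case by (simp add: epath_def)
next
  case (2 a) then show ?case by (simp add: epath_def)
next
  case (3 a b w) then show ?case by (simp add: epath_Cons2)
qed

lemma ep_nonempty: "ep p \<Longrightarrow> p \<noteq> []" by auto

lemma ep_idems: "ep p \<Longrightarrow> set p \<subseteq> idems"
proof -
  assume "ep p"
  then have "epath p" by simp
  then show ?thesis unfolding epath_def by (elim conjE)
qed

lemma ep_app: "xs \<noteq> [] \<Longrightarrow> ys \<noteq> [] \<Longrightarrow> ep (xs @ ys) \<longleftrightarrow> ep xs \<and> ep ys \<and> rel (last xs) (hd ys)"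
proof (induction xs rule: ep.induct)
  case 1 then show ?case by simp
next
  case (2 a) then show ?case by (cases ys) auto
next
  case (3 a b w) then show ?case by auto
qed

lemma ep_app3: "ep xs \<Longrightarrow> ep ys \<Longrightarrow> rel (last xs) (hd ys) \<Longrightarrow> ep (xs @ ys)"
proof -
  assume H: "ep xs" "ep ys" "rel (last xs) (hd ys)"
  have ne: "xs \<noteq> []" "ys \<noteq> []" using H(1,2) by auto
  show ?thesis using ep_app[OF ne] H by simp
qed

lemma ep_snoc: "ep (xs @ [a]) \<longleftrightarrow> (if xs = [] then a \<in> idems else ep xs \<and> a \<in> idems \<and> rel (last xs) a)"
  using ep_app[of xs "[a]"] by auto

lemma ep_Cons: "ep (a # xs) \<longleftrightarrow> (if xs = [] then a \<in> idems else ep xs \<and> a \<in> idems \<and> rel a (hd xs))"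
  by (cases xs) auto

lemma ep_rev: "ep p \<Longrightarrow> ep (rev p)"
proof (induction p rule: ep.induct)
  case (3 a b w)
  then have "ep (rev (b # w))" "a \<in> idems" "rel b a" using rel_sym by auto
  then show ?case using ep_app[of "rev (b # w)" "[a]"] by (simp add: last_rev)
qed auto

lemma ep_join: "ep p \<Longrightarrow> ep q \<Longrightarrow> last p = hd q \<Longrightarrow> ep (p @ tl q)"
proof (cases q)
  case (Cons a q')
  assume H: "ep p" "ep q" "last p = hd q"
  show ?thesis
  proof (cases q')
    case Nil then show ?thesis using H Cons by simp
  next
    case (Cons b w)
    then show ?thesis using H \<open>q = a # q'\<close> ep_app[of p "b # w"] ep_nonempty[of p] by auto
  qed
qed auto

lemma ep_replace:
  assumes "ep (A @ x @ B)" "ep y" "x \<noteq> []" "hd x = hd y" "last x = last y"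
  shows "ep (A @ y @ B)"
proof -
  have y: "y \<noteq> []" using assms(2) by auto
  have xB: "ep (x @ B)"
  proof (cases "A = []")
    case True then show ?thesis using assms(1) by simp
  next
    case False then show ?thesis using assms(1,3) ep_app[of A "x @ B"] by simp
  qed
  have Ax: "ep A \<and> rel (last A) (hd y)" if "A \<noteq> []"
  proof -
    have "ep A \<and> rel (last A) (hd (x @ B))" using that assms(1,3) ep_app[of A "x @ B"] by simp
    then show ?thesis using assms(3,4) by simp
  qed
  have yB: "ep (y @ B)"
  proof (cases "B = []")
    case True then show ?thesis using assms(2) by simp
  next
    case False
    then have "ep B \<and> rel (last x) (hd B)" using xB ep_app[of x B] assms(3) by simp
    then show ?thesis using False ep_app[of y B] assms(2,5) y by simp
  qed
  show ?thesis
  proof (cases "A = []")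
    case True then show ?thesis using yB by simp
  next
    case False
    then show ?thesis using Ax[OF False] yB ep_app[of A "y @ B"] y by simp
  qed
qed

lemma ep_mid: "ep (A @ x @ B) \<Longrightarrow> x \<noteq> [] \<Longrightarrow> ep x"
proof -
  assume H: "ep (A @ x @ B)" "x \<noteq> []"
  have "ep (x @ B)" using H ep_app[of A "x @ B"] by (cases "A = []") auto
  then show "ep x" using H ep_app[of x B] by (cases "B = []") auto
qed



abbreviation SS :: "('a::semigroup_mult list \<times> 'a list) set" where "SS \<equiv> ess_step \<union> ess_step\<inverse>"

lemma ess_stepD:
  assumes "(p, q) \<in> ess_step"
  shows "ep p \<and> ep q \<and> hd p = hd q \<and> last p = last q"
proof -
  from assms have E: "ep p" "ep q" unfolding ess_step_def by auto
  from assms consider (del) xs a b c ys where "p = xs @ [a,b,c] @ ys" "q = xs @ [a,c] @ ys"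
    | (dup) xs a ys where "p = xs @ [a,a] @ ys" "q = xs @ [a] @ ys"
    unfolding ess_step_def by blast
  then have "hd p = hd q \<and> last p = last q"
  proof cases
    case del then show ?thesis by (cases xs; cases ys rule: rev_cases) auto
  next
    case dup then show ?thesis by (cases xs; cases ys rule: rev_cases) auto
  qed
  then show ?thesis using E by simp
qed

lemma SS_D: "(p, q) \<in> SS \<Longrightarrow> ep p \<and> ep q \<and> hd p = hd q \<and> last p = last q"
  using ess_stepD[of p q] ess_stepD[of q p] by auto

lemma ce_iff: "(p, q) \<in> chain_equiv \<longleftrightarrow> ep p \<and> ep q \<and> (p, q) \<in> SS\<^sup>*"
  by (simp add: chain_equiv_def)

lemma SS_rt_hdlast: "(p, q) \<in> SS\<^sup>* \<Longrightarrow> hd p = hd q \<and> last p = last q"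
proof (induction rule: rtrancl_induct)
  case (step y z) then show ?case using SS_D[of y z] by simp
qed simp

lemma ce_hdlast: "(p, q) \<in> chain_equiv \<Longrightarrow> hd p = hd q \<and> last p = last q"
  using ce_iff SS_rt_hdlast by blast

lemma ce_ep: "(p, q) \<in> chain_equiv \<Longrightarrow> ep p \<and> ep q"
  using ce_iff by blast

lemma ce_refl: "ep p \<Longrightarrow> (p, p) \<in> chain_equiv"
  by (simp add: ce_iff)

lemma SS_rt_sym: "(p, q) \<in> SS\<^sup>* \<Longrightarrow> (q, p) \<in> SS\<^sup>*"
proof (induction rule: rtrancl_induct)
  case (step y z)
  then have "(z, y) \<in> SS" by auto
  then show ?case using step(3) by (rule converse_rtrancl_into_rtrancl)
qed simp

lemma ce_sym: "(p, q) \<in> chain_equiv \<Longrightarrow> (q, p) \<in> chain_equiv"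
  using ce_iff SS_rt_sym by blast

lemma ce_trans: "(p, q) \<in> chain_equiv \<Longrightarrow> (q, r) \<in> chain_equiv \<Longrightarrow> (p, r) \<in> chain_equiv"
  unfolding ce_iff by (blast intro: rtrancl_trans)

lemma ce_step: "(p, q) \<in> ess_step \<Longrightarrow> (p, q) \<in> chain_equiv"
  using ess_stepD[of p q] by (auto simp: ce_iff)

lemma equiv_ce: "equiv {p. ep p} chain_equiv"
proof (rule equivI)
  show "chain_equiv \<subseteq> {p. ep p} \<times> {p. ep p}" using ce_ep by auto
  show "refl_on {p. ep p} chain_equiv" by (rule refl_onI) (simp add: ce_refl)
  show "sym chain_equiv" using ce_sym by (auto intro: symI)
  show "trans chain_equiv" using ce_trans by (auto intro: transI)
qed

lemma ess_stepI1:
  assumes "ep (xs @ [a,b,c] @ ys)" "ep (xs @ [a,c] @ ys)" "(Rrel a b \<and> Rrel b c) \<or> (Lrel a b \<and> Lrel b c)"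
  shows "(xs @ [a,b,c] @ ys, xs @ [a,c] @ ys) \<in> ess_step"
proof -
  have "\<exists>xs' a' b' c' ys'. xs @ [a,b,c] @ ys = xs' @ [a', b', c'] @ ys' \<and> xs @ [a,c] @ ys = xs' @ [a', c'] @ ys' \<and>
            ((Rrel a' b' \<and> Rrel b' c') \<or> (Lrel a' b' \<and> Lrel b' c'))"
    using assms(3) by blast
  then show ?thesis using assms(1,2) unfolding ess_step_def by simp
qed

lemma ess_stepI2:
  assumes "ep (xs @ [a,a] @ ys)" "ep (xs @ [a] @ ys)"
  shows "(xs @ [a,a] @ ys, xs @ [a] @ ys) \<in> ess_step"
proof -
  have "\<exists>xs' a' ys'. xs @ [a,a] @ ys = xs' @ [a', a'] @ ys' \<and> xs @ [a] @ ys = xs' @ [a'] @ ys'"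
    by blast
  then show ?thesis using assms(1,2) unfolding ess_step_def by simp
qed

lemma ce_del3:
  assumes "ep (A @ [a,b,c] @ B)" "(Rrel a b \<and> Rrel b c) \<or> (Lrel a b \<and> Lrel b c)"
  shows "(A @ [a,b,c] @ B, A @ [a,c] @ B) \<in> chain_equiv"
proof -
  have "ep [a,b,c]" using ep_mid[OF assms(1)] by simp
  then have "a \<in> idems" "c \<in> idems" by auto
  moreover have "rel a c" using assms(2) Rrel_trans Lrel_trans by blast
  ultimately have "ep [a,c]" by simp
  then have "ep (A @ [a,c] @ B)" using ep_replace[OF assms(1), of "[a,c]"] by simp
  then show ?thesis using ess_stepI1[OF assms(1) _ assms(2)] ce_step by blast
qed

lemma ce_dup:
  assumes "ep (A @ [a,a] @ B)"
  shows "(A @ [a,a] @ B, A @ [a] @ B) \<in> chain_equiv"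
proof -
  have "ep [a,a]" using ep_mid[OF assms(1)] by simp
  then have "ep [a]" by simp
  then have "ep (A @ [a] @ B)" using ep_replace[OF assms(1), of "[a]"] by simp
  then show ?thesis using ess_stepI2[OF assms(1)] ce_step by blast
qed

lemma ess_step_ctx:
  assumes "(x, y) \<in> ess_step" "ep (A @ x @ B)" "ep (A @ y @ B)"
  shows "(A @ x @ B, A @ y @ B) \<in> ess_step"
proof -
  from assms(1) consider (del) xs a b c ys where "x = xs @ [a,b,c] @ ys" "y = xs @ [a,c] @ ys" "(Rrel a b \<and> Rrel b c) \<or> (Lrel a b \<and> Lrel b c)"
    | (dup) xs a ys where "x = xs @ [a,a] @ ys" "y = xs @ [a] @ ys"
    unfolding ess_step_def by blast
  then show ?thesis
  proof cases
    case del
    have "A @ x @ B = (A @ xs) @ [a,b,c] @ (ys @ B)" "A @ y @ B = (A @ xs) @ [a,c] @ (ys @ B)" using del by simp_all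
    then show ?thesis using assms(2,3) del(3) ess_stepI1[of "A @ xs" a b c "ys @ B"] by simp
  next
    case dup
    have "A @ x @ B = (A @ xs) @ [a,a] @ (ys @ B)" "A @ y @ B = (A @ xs) @ [a] @ (ys @ B)" using dup by simp_all
    then show ?thesis using assms(2,3) ess_stepI2[of "A @ xs" a "ys @ B"] by simp
  qed
qed

lemma ce_ctx:
  assumes "(x, y) \<in> chain_equiv" "ep (A @ x @ B)"
  shows "(A @ x @ B, A @ y @ B) \<in> chain_equiv"
proof -
  from assms(1) have xy: "(x, y) \<in> SS\<^sup>*" "ep x" by (auto simp: ce_iff)
  have "(x, z) \<in> SS\<^sup>* \<Longrightarrow> ep z \<and> hd z = hd x \<and> last z = last x \<and> ep (A @ z @ B) \<and> (A @ x @ B, A @ z @ B) \<in> SS\<^sup>*" for z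
  proof (induction rule: rtrancl_induct)
    case base then show ?case using xy(2) assms(2) by simp
  next
    case (step z z')
    from SS_D[OF step(2)] have z': "ep z'" "hd z' = hd z" "last z' = last z" "ep z" by auto
    have ez: "ep (A @ z @ B)" using step(3) by blast
    then have ez': "ep (A @ z' @ B)" using ep_replace[of A z B z'] z' ep_nonempty[of z] by simp
    have sz: "(A @ z @ B, A @ z' @ B) \<in> SS"
      using step(2) ess_step_ctx[of z z' A B] ess_step_ctx[of z' z A B] ez ez' by auto
    have rz: "(A @ x @ B, A @ z @ B) \<in> SS\<^sup>*" using step(3) by blast
    have "(A @ x @ B, A @ z' @ B) \<in> SS\<^sup>*" using rtrancl_into_rtrancl[OF rz sz] .
    moreover have "hd z' = hd x" "last z' = last x" using z'(2,3) step(3) by auto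
    ultimately show ?case using ez' z'(1) by blast
  qed
  from this[OF xy(1)] show ?thesis using assms(2) by (auto simp: ce_iff)
qed

lemma ce_cancel: "ep p \<Longrightarrow> (p @ tl (rev p), [hd p]) \<in> chain_equiv"
proof (induction p rule: rev_induct)
  case Nil then show ?case by simp
next
  case (snoc a q)
  show ?case
  proof (cases "q = []")
    case True then show ?thesis using snoc by (simp add: ce_refl)
  next
    case False
    then obtain q' b where qb: "q = q' @ [b]" by (metis rev_exhaust)
    have epq: "ep q" and ra: "rel b a" using snoc(2) False qb ep_snoc[of q a] by auto
    have E: "q @ [a] @ tl (rev (q @ [a])) = q' @ [b, a, b] @ rev q'" using qb by simp
    have epE: "ep (q' @ [b, a, b] @ rev q')"
      using ep_join[OF snoc(2) ep_rev[OF snoc(2)]] E by (simp add: last_rev hd_rev)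
    have s1: "(q' @ [b, a, b] @ rev q', q' @ [b, b] @ rev q') \<in> chain_equiv"
      using ce_del3[OF epE] ra Rrel_sym Lrel_sym by blast
    have s2: "(q' @ [b, b] @ rev q', q' @ [b] @ rev q') \<in> chain_equiv"
      using ce_dup ce_ep[OF s1] by blast
    have s3: "q' @ [b] @ rev q' = q @ tl (rev q)" using qb by simp
    have s4: "(q @ tl (rev q), [hd q]) \<in> chain_equiv" using snoc(1)[OF epq] .
    have "(q' @ [b, a, b] @ rev q', [hd q]) \<in> chain_equiv"
      using ce_trans[OF ce_trans[OF s1 s2] s4[folded s3]] .
    then have "(q @ [a] @ tl (rev (q @ [a])), [hd q]) \<in> chain_equiv" using E by simp
    then show ?thesis using False by simp
  qed
qed

lemma ce_cancel2: "ep p \<Longrightarrow> (p @ rev p, [hd p]) \<in> chain_equiv"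
proof -
  assume ep: "ep p"
  then obtain q a where pa: "p = q @ [a]" by (metis ep_nonempty rev_exhaust)
  have pr: "p @ rev p = q @ [a, a] @ rev q" using pa by simp
  have "ep (p @ rev p)"
  proof -
    have "a \<in> idems" using ep_idems[OF ep] pa by auto
    then have "rel (last p) (hd (rev p))" using pa Rrel_refl[of a] by (simp add: hd_rev)
    then show ?thesis using ep_app[of p "rev p"] ep ep_rev[OF ep] pa by simp
  qed
  then have "ep (q @ [a, a] @ rev q)" using pr by simp
  then have "(q @ [a, a] @ rev q, q @ [a] @ rev q) \<in> chain_equiv" by (rule ce_dup)
  moreover have "q @ [a] @ rev q = p @ tl (rev p)" using pa by simp
  ultimately have "(p @ rev p, p @ tl (rev p)) \<in> chain_equiv" using pr by simp
  then show ?thesis using ce_trans[OF _ ce_cancel[OF ep]] by blast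
qed

lemma ce_cancel3: "ep p \<Longrightarrow> (rev p @ tl p, [last p]) \<in> chain_equiv"
  using ce_cancel[OF ep_rev[of p]] by (simp add: hd_rev)

definition cls :: "'a::semigroup_mult list \<Rightarrow> 'a list set" where "cls p = chain_equiv `` {p}"

lemma cls_eq: "ep p \<Longrightarrow> ep q \<Longrightarrow> cls p = cls q \<longleftrightarrow> (p, q) \<in> chain_equiv"
  unfolding cls_def using eq_equiv_class_iff[OF equiv_ce] by simp

lemma cls_mem: "q \<in> cls p \<longleftrightarrow> (p, q) \<in> chain_equiv"
  unfolding cls_def by simp

lemma cls_self: "ep p \<Longrightarrow> p \<in> cls p"
  by (simp add: cls_mem ce_refl)

lemma join_eq: "p \<noteq> [] \<Longrightarrow> q \<noteq> [] \<Longrightarrow> last p = hd q \<Longrightarrow> p @ tl q = butlast p @ q"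
  by (cases q; cases p rule: rev_cases) auto

lemma last_join: "p \<noteq> [] \<Longrightarrow> q \<noteq> [] \<Longrightarrow> last p = hd q \<Longrightarrow> last (p @ tl q) = last q"
  by (simp add: join_eq)

lemma hd_join: "p \<noteq> [] \<Longrightarrow> hd (p @ tl q) = hd p"
  by simp

lemma chain_mult_cls:
  assumes "ep p" "ep q" "last p = hd q"
  shows "chain_mult (cls p) (cls q) = cls (p @ tl q)"
proof -
  define p' where "p' = (SOME x. x \<in> cls p)"
  define q' where "q' = (SOME x. x \<in> cls q)"
  have "p' \<in> cls p" unfolding p'_def using cls_self[OF assms(1)] by (rule someI)
  then have pp: "(p, p') \<in> chain_equiv" by (simp add: cls_mem)
  have "q' \<in> cls q" unfolding q'_def using cls_self[OF assms(2)] by (rule someI)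
  then have qq: "(q, q') \<in> chain_equiv" by (simp add: cls_mem)
  have ep': "ep p'" "ep q'" using ce_ep[OF pp] ce_ep[OF qq] by auto
  have ne: "p \<noteq> []" "q \<noteq> []" "p' \<noteq> []" "q' \<noteq> []" "ep p'" "ep q'"
    using assms ep' ep_nonempty by auto
  have hl: "hd q' = hd q" "last p' = last p" using ce_hdlast[OF pp] ce_hdlast[OF qq] by auto
  have e1: "ep (p @ tl q)" using ep_join assms by blast
  have "(butlast p @ q @ [], butlast p @ q' @ []) \<in> chain_equiv"
    using ce_ctx[OF qq, of "butlast p" "[]"] e1 join_eq[of p q] assms ne by simp
  then have 1: "(p @ tl q, p @ tl q') \<in> chain_equiv"
    using join_eq[of p q] join_eq[of p q'] assms ne hl by simp
  have e2: "ep (p @ tl q')" using ep_join[OF assms(1) ne(6)] assms(3) hl by simp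
  have "([] @ p @ tl q', [] @ p' @ tl q') \<in> chain_equiv"
    using ce_ctx[OF pp, of "[]" "tl q'"] e2 by simp
  then have 2: "(p @ tl q, p' @ tl q') \<in> chain_equiv" using 1 ce_trans by simp
  have "chain_mult (cls p) (cls q) = cls (p' @ tl q')"
    unfolding chain_mult_def p'_def q'_def cls_def by simp
  also have "\<dots> = cls (p @ tl q)" using cls_eq[of "p' @ tl q'" "p @ tl q"] ce_ep[OF 2] ce_sym[OF 2] by simp
  finally show ?thesis .
qed

lemma vg_carrier: "carrier (vertex_group e) = echains e e" by (simp add: vertex_group_def)
lemma vg_mult: "monoid.mult (vertex_group e) x y = chain_mult x y" by (simp add: vertex_group_def)
lemma vg_one: "monoid.one (vertex_group e) = cls [e]" by (simp add: vertex_group_def cls_def)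
lemma echains_iff: "x \<in> echains e f \<longleftrightarrow> (\<exists>p. ep p \<and> hd p = e \<and> last p = f \<and> x = cls p)"
  unfolding echains_def cls_def by auto

lemma vg_group:
  assumes "e \<in> idems"
  shows "group (vertex_group e)"
proof (rule groupI)
  fix x y
  assume "x \<in> carrier (vertex_group e)" "y \<in> carrier (vertex_group e)"
  then obtain p q where p: "ep p" "hd p = e" "last p = e" "x = cls p" and q: "ep q" "hd q = e" "last q = e" "y = cls q"
    by (auto simp: vg_carrier echains_iff)
  have "monoid.mult (vertex_group e) x y = cls (p @ tl q)" using chain_mult_cls[OF p(1) q(1)] p q by (simp add: vg_mult)
  moreover have "ep (p @ tl q)" using ep_join[OF p(1) q(1)] p(3) q(2) by simp
  moreover have "hd (p @ tl q) = e" using p(2) ep_nonempty[OF p(1)] by simp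
  moreover have "last (p @ tl q) = e" using last_join[of p q] ep_nonempty[OF p(1)] ep_nonempty[OF q(1)] p(3) q(2,3) by simp
  ultimately show "monoid.mult (vertex_group e) x y \<in> carrier (vertex_group e)" by (auto simp: vg_carrier echains_iff)
next
  show "monoid.one (vertex_group e) \<in> carrier (vertex_group e)"
    unfolding vg_one vg_carrier echains_iff using assms by (intro exI[of _ "[e]"]) simp
next
  fix x y z
  assume "x \<in> carrier (vertex_group e)" "y \<in> carrier (vertex_group e)" "z \<in> carrier (vertex_group e)"
  then obtain p q r where p: "ep p" "hd p = e" "last p = e" "x = cls p" and q: "ep q" "hd q = e" "last q = e" "y = cls q"
     and r: "ep r" "hd r = e" "last r = e" "z = cls r"
    by (auto simp: vg_carrier echains_iff)
  have ne: "p \<noteq> []" "q \<noteq> []" "r \<noteq> []" using p q r by auto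
  have pq: "monoid.mult (vertex_group e) x y = cls (p @ tl q)" using chain_mult_cls[OF p(1) q(1)] p q by (simp add: vg_mult)
  have qr: "monoid.mult (vertex_group e) y z = cls (q @ tl r)" using chain_mult_cls[OF q(1) r(1)] q r by (simp add: vg_mult)
  have epq: "ep (p @ tl q)" "last (p @ tl q) = e" using ep_join[OF p(1) q(1)] p q last_join[of p q] ne by auto
  have eqr: "ep (q @ tl r)" "hd (q @ tl r) = e" using ep_join[OF q(1) r(1)] q r ne by auto
  have "monoid.mult (vertex_group e) (monoid.mult (vertex_group e) x y) z = cls ((p @ tl q) @ tl r)"
    using pq chain_mult_cls[OF epq(1) r(1)] epq r by (simp add: vg_mult)
  moreover have "monoid.mult (vertex_group e) x (monoid.mult (vertex_group e) y z) = cls (p @ tl (q @ tl r))"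
    using qr chain_mult_cls[OF p(1) eqr(1)] eqr p by (simp add: vg_mult)
  moreover have "(p @ tl q) @ tl r = p @ tl (q @ tl r)" using ne by (cases q) auto
  ultimately show "monoid.mult (vertex_group e) (monoid.mult (vertex_group e) x y) z = monoid.mult (vertex_group e) x (monoid.mult (vertex_group e) y z)"
    by simp
next
  fix x
  assume "x \<in> carrier (vertex_group e)"
  then obtain p where p: "ep p" "hd p = e" "last p = e" "x = cls p"
    by (auto simp: vg_carrier echains_iff)
  have "monoid.mult (vertex_group e) (monoid.one (vertex_group e)) x = cls ([e] @ tl p)"
    using chain_mult_cls[OF _ p(1), of "[e]"] p assms by (simp add: vg_mult vg_one)
  also have "[e] @ tl p = p" using p by (cases p) auto
  finally show "monoid.mult (vertex_group e) (monoid.one (vertex_group e)) x = x" using p by simp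
next
  fix x
  assume "x \<in> carrier (vertex_group e)"
  then obtain p where p: "ep p" "hd p = e" "last p = e" "x = cls p"
    by (auto simp: vg_carrier echains_iff)
  have r: "ep (rev p)" "hd (rev p) = e" "last (rev p) = e" using p ep_rev by (auto simp: hd_rev last_rev)
  have "monoid.mult (vertex_group e) (cls (rev p)) x = cls (rev p @ tl p)"
    using chain_mult_cls[OF r(1) p(1)] p r by (simp add: vg_mult)
  also have "\<dots> = cls [e]"
  proof -
    have c3: "(rev p @ tl p, [e]) \<in> chain_equiv" using ce_cancel3[OF p(1)] p(3) by simp
    then show ?thesis using cls_eq[of "rev p @ tl p" "[e]"] ce_ep[OF c3] by simp
  qed
  finally have "monoid.mult (vertex_group e) (cls (rev p)) x = monoid.one (vertex_group e)" by (simp add: vg_one)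
  moreover have "cls (rev p) \<in> carrier (vertex_group e)" using r by (auto simp: vg_carrier echains_iff)
  ultimately show "\<exists>y\<in>carrier (vertex_group e). monoid.mult (vertex_group e) y x = monoid.one (vertex_group e)" by blast
qed

lemma vg_inv:
  assumes "e \<in> idems" "ep p" "hd p = e" "last p = e"
  shows "m_inv (vertex_group e) (cls p) = cls (rev p)"
proof -
  interpret G: group "vertex_group e" using vg_group[OF assms(1)] .
  have r: "ep (rev p)" "hd (rev p) = e" "last (rev p) = e" using assms ep_rev by (auto simp: hd_rev last_rev)
  have "monoid.mult (vertex_group e) (cls (rev p)) (cls p) = cls (rev p @ tl p)"
    using chain_mult_cls[OF r(1) assms(2)] assms r by (simp add: vg_mult)
  also have "\<dots> = cls [e]"
  proof -
    have c3: "(rev p @ tl p, [e]) \<in> chain_equiv" using ce_cancel3[OF assms(2)] assms(4) by simp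
    then show ?thesis using cls_eq[of "rev p @ tl p" "[e]"] ce_ep[OF c3] by simp
  qed
  finally show ?thesis using G.inv_equality[of "cls (rev p)" "cls p"] r assms
    by (auto simp: vg_one vg_carrier echains_iff)
qed



definition flip :: "bool \<times> 'b \<Rightarrow> bool \<times> 'b" where "flip x = (\<not> fst x, snd x)"

lemma flip_flip[simp]: "flip (flip x) = x" by (simp add: flip_def)

fun cancel :: "bool \<times> 'b \<Rightarrow> (bool \<times> 'b) list \<Rightarrow> (bool \<times> 'b) list" where
  "cancel x [] = [x]"
| "cancel x (y # w) = (if y = flip x then w else x # y # w)"

fun red :: "(bool \<times> 'b) list \<Rightarrow> (bool \<times> 'b) list" where
  "red [] = []"
| "red (x # w) = cancel x (red w)"

fun rd :: "(bool \<times> 'b) list \<Rightarrow> bool" where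
  "rd [] = True"
| "rd [x] = True"
| "rd (x # y # w) = (y \<noteq> flip x \<and> rd (y # w))"

lemma rd_tl: "rd (y # w) \<Longrightarrow> rd w"
  by (cases w) auto

lemma rd_cancel: "rd w \<Longrightarrow> rd (cancel x w)"
  by (cases w) (auto dest: rd_tl)

lemma rd_red: "rd (red w)"
  by (induction w) (auto intro: rd_cancel)

lemma red_rd: "rd w \<Longrightarrow> red w = w"
proof (induction w rule: rd.induct)
  case (3 x y w)
  then show ?case by simp
qed auto

lemma red_app: "red (u @ w) = foldr cancel u (red w)"
  by (induction u) auto

lemma cancel2: "rd s \<Longrightarrow> cancel x (cancel (flip x) s) = s"
proof (cases s)
  case Nil then show ?thesis by simp
next
  case (Cons y s')
  assume rs: "rd s"
  show ?thesis
  proof (cases "y = x")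
    case True
    then show ?thesis using Cons rs by (cases s') auto
  next
    case False
    then have "y \<noteq> flip (flip x)" by simp
    then show ?thesis using Cons by auto
  qed
qed

lemma red_ins: "red (U @ [x, flip x] @ V) = red (U @ V)"
proof -
  have "red ([x, flip x] @ V) = red V" using cancel2[OF rd_red[of V], of x] by simp
  then show ?thesis using red_app[of U "[x, flip x] @ V"] red_app[of U V] by simp
qed

section \<open>Raw words of paths\<close>

definition pos :: "'a set \<Rightarrow> 'a \<Rightarrow> (bool \<times> 'a) list" where
  "pos N a = (if a \<in> N then [(True, a)] else [])"
definition neg :: "'a set \<Rightarrow> 'a \<Rightarrow> (bool \<times> 'a) list" where
  "neg N a = (if a \<in> N then [(False, a)] else [])"

definition sw :: "'a set \<Rightarrow> 'a::semigroup_mult \<Rightarrow> 'a \<Rightarrow> (bool \<times> 'a) list" where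
  "sw N a b = (if Rrel a b then [] else pos N a @ neg N b)"

fun raw :: "'a::semigroup_mult set \<Rightarrow> 'a list \<Rightarrow> (bool \<times> 'a) list" where
  "raw N (a # b # w) = sw N a b @ raw N (b # w)"
| "raw N _ = []"

lemma raw_app: "raw N (xs @ a # ys) = raw N (xs @ [a]) @ raw N (a # ys)"
proof (induction xs)
  case Nil then show ?case by simp
next
  case (Cons x xs)
  then show ?case by (cases xs) auto
qed

lemma raw_join: "p \<noteq> [] \<Longrightarrow> q \<noteq> [] \<Longrightarrow> last p = hd q \<Longrightarrow> raw N (p @ tl q) = raw N p @ raw N q"
proof -
  assume H: "p \<noteq> []" "q \<noteq> []" "last p = hd q"
  obtain p' where p': "p = p' @ [hd q]" using H by (metis append_butlast_last_id)
  obtain q' where q': "q = hd q # q'" using H by (metis list.collapse)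
  have "p @ tl q = p' @ hd q # q'" using p' q' by (metis append.assoc append_Cons append_Nil list.sel(3))
  then have "raw N (p @ tl q) = raw N (p' @ [hd q]) @ raw N (hd q # q')" using raw_app[of N p' "hd q" q'] by simp
  then show ?thesis using p' q' by simp
qed

lemma sw_rev: "sw N b a = rev (map flip (sw N a b))"
  by (auto simp: sw_def pos_def neg_def flip_def Rrel_def)

lemma raw_rev: "raw N (rev p) = rev (map flip (raw N p))"
proof (induction N p rule: raw.induct)
  case (1 N a b w)
  have "raw N (rev (a # b # w)) = raw N (rev w @ b # [a])" by simp
  also have "\<dots> = raw N (rev (b # w)) @ raw N [b, a]" using raw_app[of N "rev w" b "[a]"] by simp
  also have "\<dots> = rev (map flip (raw N (b # w))) @ sw N b a" using 1 by simp
  finally show ?case using sw_rev[of N b a] by simp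
qed auto

lemma raw_noN: "set p \<inter> N = {} \<Longrightarrow> raw N p = []"
proof (induction N p rule: raw.induct)
  case (1 N a b w)
  then show ?case by (auto simp: sw_def pos_def neg_def)
qed auto

lemma red_del_pair: "red (U @ neg N b @ pos N b @ V) = red (U @ V)"
  using red_ins[of U "(False, b)" V] by (auto simp: pos_def neg_def flip_def)

lemma red_del_pair2: "red (U @ pos N b @ neg N b @ V) = red (U @ V)"
  using red_ins[of U "(True, b)" V] by (auto simp: pos_def neg_def flip_def)

lemma ess_step_red:
  assumes "(p, q) \<in> ess_step"
  shows "red (raw N p) = red (raw N q)"
proof -
  from assms have ep: "ep p" unfolding ess_step_def by auto
  from assms consider (del) xs a b c ys where "p = xs @ [a,b,c] @ ys" "q = xs @ [a,c] @ ys" "(Rrel a b \<and> Rrel b c) \<or> (Lrel a b \<and> Lrel b c)"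
    | (dup) xs a ys where "p = xs @ [a,a] @ ys" "q = xs @ [a] @ ys"
    unfolding ess_step_def by blast
  then show ?thesis
  proof cases
    case del
    define U where "U = raw N (xs @ [a])"
    define V where "V = raw N (c # ys)"
    have rp: "raw N p = U @ sw N a b @ sw N b c @ V"
      unfolding U_def V_def del(1) using raw_app[of N xs a "b # c # ys"] by simp
    have rq: "raw N q = U @ sw N a c @ V"
      unfolding U_def V_def del(2) using raw_app[of N xs a "c # ys"] by simp
    show ?thesis
    proof (cases "Rrel a b \<and> Rrel b c")
      case True
      then have "Rrel a c" using Rrel_trans by blast
      then show ?thesis using rp rq True by (simp add: sw_def)
    next
      case False
      then have L: "Lrel a b" "Lrel b c" using del(3) by auto
      then have Lac: "Lrel a c" using Lrel_trans by blast
      show ?thesis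
      proof (cases "Rrel a b")
        case True
        then have "a = b" using L RL_eq by blast
        then show ?thesis using rp rq True by (simp add: sw_def)
      next
        case nab: False
        show ?thesis
        proof (cases "Rrel b c")
          case True
          then have "b = c" using L RL_eq by blast
          then show ?thesis using rp rq True by (simp add: sw_def)
        next
          case nbc: False
          show ?thesis
          proof (cases "Rrel a c")
            case True
            then have "a = c" using Lac RL_eq by blast
            have "raw N p = U @ pos N a @ (neg N b @ pos N b @ (neg N a @ V))"
              using rp nab nbc \<open>a = c\<close> by (simp add: sw_def)
            then have "red (raw N p) = red (U @ pos N a @ neg N a @ V)"
              using red_del_pair[of "U @ pos N a" N b "neg N a @ V"] by simp
            also have "\<dots> = red (U @ V)" using red_del_pair2[of U N a V] by simp
            finally show ?thesis using rq True by (simp add: sw_def)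
          next
            case False
            have "raw N p = (U @ pos N a) @ neg N b @ pos N b @ (neg N c @ V)"
              using rp nab nbc by (simp add: sw_def)
            then have "red (raw N p) = red ((U @ pos N a) @ (neg N c @ V))"
              using red_del_pair[of "U @ pos N a" N b "neg N c @ V"] by simp
            then show ?thesis using rq False by (simp add: sw_def)
          qed
        qed
      qed
    qed
  next
    case dup
    have "a \<in> idems" using ep dup(1) ep_idems by fastforce
    then have "sw N a a = []" by (simp add: sw_def Rrel_refl)
    then show ?thesis using dup raw_app[of N xs a "a # ys"] raw_app[of N xs a ys] by simp
  qed
qed

lemma ce_red:
  assumes "(p, q) \<in> chain_equiv"
  shows "red (raw N p) = red (raw N q)"
proof -
  from assms have "(p, q) \<in> SS\<^sup>*" by (simp add: ce_iff)
  then show ?thesis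
  proof (induction rule: rtrancl_induct)
    case (step y z)
    then show ?case using ess_step_red[of y z N] ess_step_red[of z y N] by auto
  qed simp
qed



lemma comp_e: "e \<in> idems \<Longrightarrow> e \<in> component e"
  unfolding component_def by (rule CollectI, rule exI[of _ "[e]"]) simp

lemma comp_idems: "f \<in> component e \<Longrightarrow> f \<in> idems"
proof -
  assume "f \<in> component e"
  then obtain p where p: "ep p" "last p = f" unfolding component_def by auto
  then have "f \<in> set p" using ep_nonempty last_in_set by metis
  then show ?thesis using ep_idems[OF p(1)] by blast
qed

lemma comp_path: "ep p \<Longrightarrow> hd p = e \<Longrightarrow> last p \<in> component e"
  unfolding component_def by auto

lemma comp_set: "ep p \<Longrightarrow> hd p = e \<Longrightarrow> set p \<subseteq> component e"
proof (induction p rule: rev_induct)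
  case Nil then show ?case by simp
next
  case (snoc a q)
  have "a \<in> component e" using comp_path[OF snoc(2,3)] by simp
  moreover have "q \<noteq> [] \<Longrightarrow> set q \<subseteq> component e"
    using snoc ep_snoc[of q a] by (simp split: if_splits)
  ultimately show ?case by (cases "q = []") auto
qed

definition goodu :: "'a::semigroup_mult \<Rightarrow> 'a set \<Rightarrow> 'a list \<Rightarrow> bool" where
  "goodu e T p \<longleftrightarrow> ep p \<and> hd p = e \<and> set (tl p) \<subseteq> T \<and> (tl p \<noteq> [] \<longrightarrow> Rrel e (hd (tl p)))"

lemma goodu_mono: "goodu e T p \<Longrightarrow> T \<subseteq> T' \<Longrightarrow> goodu e T' p"
  unfolding goodu_def by blast

lemma goodu_snoc:
  assumes "goodu e T p" "ep (p @ [f])" "tl p = [] \<Longrightarrow> Rrel e f"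
  shows "goodu e (insert f T) (p @ [f])"
proof -
  have ne: "p \<noteq> []" using assms(1) unfolding goodu_def by auto
  then have "tl (p @ [f]) = tl p @ [f]" by simp
  then show ?thesis using assms ne unfolding goodu_def by (cases "tl p = []") auto
qed

definition tinv :: "'a::semigroup_mult \<Rightarrow> 'a set set \<Rightarrow> 'a set set \<Rightarrow> ('a set \<Rightarrow> 'a list) \<Rightarrow> ('a set \<Rightarrow> 'a list) \<Rightarrow> 'a set \<Rightarrow> bool" where
  "tinv e VR VL u v T \<longleftrightarrow>
    VR \<subseteq> Rclass ` component e \<and> VL \<subseteq> Lclass ` component e \<and> Rclass e \<in> VR \<and> u (Rclass e) = [e] \<and>
    T \<subseteq> component e \<and> card T + 1 = card VR + card VL \<and>
    (\<forall>f\<in>T. Rclass f \<in> VR \<and> Lclass f \<in> VL) \<and>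
    (\<forall>r\<in>VR. goodu e T (u r) \<and> Rclass (last (u r)) = r) \<and>
    (\<forall>l\<in>VL. goodu e T (v l) \<and> tl (v l) \<noteq> [] \<and> last (v l) \<in> T \<and> Lclass (last (v l)) = l) \<and>
    (\<forall>f\<in>T. (u (Rclass f) @ [f] @ rev (v (Lclass f)), [e]) \<in> chain_equiv)"

lemma no_boundary:
  assumes "Rclass e \<in> VR" "\<forall>f\<in>component e. (Rclass f \<in> VR \<longleftrightarrow> Lclass f \<in> VL)"
  shows "\<forall>f\<in>component e. Rclass f \<in> VR"
proof
  have *: "ep p \<Longrightarrow> hd p = e \<Longrightarrow> Rclass (last p) \<in> VR" for p
  proof (induction p rule: rev_induct)
    case Nil then show ?case by simp
  next
    case (snoc a q)
    show ?case
    proof (cases "q = []")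
      case True then show ?thesis using snoc assms(1) by simp
    next
      case False
      then have q: "ep q" "a \<in> idems" "rel (last q) a" using snoc(2) ep_snoc[of q a] by auto
      have hq: "hd q = e" using snoc(3) False by simp
      have IH: "Rclass (last q) \<in> VR" using snoc(1)[OF q(1) hq] .
      have lq: "last q \<in> component e" "last q \<in> idems" using comp_path[OF q(1) hq] comp_idems by auto
      have ac: "a \<in> component e" using comp_path[OF snoc(2,3)] by simp
      show ?thesis
      proof (cases "Rrel (last q) a")
        case True
        then have "Rclass a = Rclass (last q)" using Rclass_eq[OF q(2) lq(2)] Rrel_sym by blast
        then show ?thesis using IH by simp
      next
        case False
        then have "Lrel (last q) a" using q(3) by blast
        then have "Lclass a = Lclass (last q)" using Lclass_eq[OF q(2) lq(2)] Lrel_sym by blast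
        moreover have "Lclass (last q) \<in> VL" using assms(2) lq(1) IH by blast
        ultimately show ?thesis using assms(2) ac by auto
      qed
    qed
  qed
  fix f assume "f \<in> component e"
  then obtain p where "ep p" "hd p = e" "last p = f" unfolding component_def by auto
  then show "Rclass f \<in> VR" using * by blast
qed

lemma grow_step:
  assumes fin: "finite (component e)" and I: "tinv e VR VL u v T"
    and ne: "VR \<noteq> Rclass ` component e \<or> VL \<noteq> Lclass ` component e"
  shows "\<exists>VR' VL' u' v' T'. tinv e VR' VL' u' v' T' \<and> card VR + card VL < card VR' + card VL'"
proof -
  note I' = I[unfolded tinv_def]
  have VRs: "VR \<subseteq> Rclass ` component e" using I' by (elim conjE)
  have VLs: "VL \<subseteq> Lclass ` component e" using I' by (elim conjE)
  have Re: "Rclass e \<in> VR" using I' by (elim conjE)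
  have ue: "u (Rclass e) = [e]" using I' by (elim conjE)
  have TC: "T \<subseteq> component e" using I' by (elim conjE)
  have cardT: "card T + 1 = card VR + card VL" using I' by (elim conjE)
  have Tcl: "\<forall>f\<in>T. Rclass f \<in> VR \<and> Lclass f \<in> VL" using I' by (elim conjE)
  have Ug: "\<forall>r\<in>VR. goodu e T (u r) \<and> Rclass (last (u r)) = r" using I' by (elim conjE)
  have Vg: "\<forall>l\<in>VL. goodu e T (v l) \<and> tl (v l) \<noteq> [] \<and> last (v l) \<in> T \<and> Lclass (last (v l)) = l"
    using I' by (elim conjE)
  have Lo: "\<forall>f\<in>T. (u (Rclass f) @ [f] @ rev (v (Lclass f)), [e]) \<in> chain_equiv" using I' by (elim conjE)
  have finVR: "finite VR" using VRs fin finite_subset by blast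
  have finVL: "finite VL" using VLs fin finite_subset by blast
  have finT: "finite T" using TC fin finite_subset by blast
  obtain f where f: "f \<in> component e" "(Rclass f \<in> VR \<and> Lclass f \<notin> VL) \<or> (Lclass f \<in> VL \<and> Rclass f \<notin> VR)"
  proof (rule ccontr)
    assume "\<not> thesis"
    with that have nb: "\<forall>f\<in>component e. (Rclass f \<in> VR \<longleftrightarrow> Lclass f \<in> VL)" by blast
    have "\<forall>f\<in>component e. Rclass f \<in> VR" using no_boundary[OF Re nb] by blast
    then have "\<forall>f\<in>component e. Rclass f \<in> VR \<and> Lclass f \<in> VL" using nb by blast
    then have "VR = Rclass ` component e" "VL = Lclass ` component e" using VRs VLs by auto
    then show False using ne by blast
  qed
  have fi: "f \<in> idems" using f(1) comp_idems by blast
  from f(2) show ?thesis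
  proof
    assume c: "Rclass f \<in> VR \<and> Lclass f \<notin> VL"
    define uf where "uf = u (Rclass f)"
    define q where "q = uf @ [f]"
    have gu: "goodu e T uf" "Rclass (last uf) = Rclass f" using Ug c uf_def by auto
    have ufne: "uf \<noteq> []" "ep uf" "hd uf = e" using gu unfolding goodu_def by auto
    have lui: "last uf \<in> idems" using ufne ep_idems last_in_set by blast
    have Rlf: "Rrel (last uf) f" using gu(2) Rclass_eq[OF lui fi] by simp
    have epq: "ep q" unfolding q_def using ep_app3[OF ufne(2), of "[f]"] Rlf fi by simp
    have fT: "f \<notin> T" using Tcl c by blast
    have goodq: "goodu e (insert f T) q"
      unfolding q_def
    proof (rule goodu_snoc[OF gu(1)])
      show "ep (uf @ [f])" using epq q_def by simp
      assume "tl uf = []"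
      then have "uf = [e]" using ufne by (cases uf) auto
      then show "Rrel e f" using Rlf by simp
    qed
    define v' where "v' = v(Lclass f := q)"
    have v'o: "l \<in> VL \<Longrightarrow> v' l = v l" for l using c v'_def by auto
    have "tinv e VR (insert (Lclass f) VL) u v' (insert f T)"
      unfolding tinv_def
    proof (intro conjI ballI)
      show "VR \<subseteq> Rclass ` component e" using VRs .
      show "insert (Lclass f) VL \<subseteq> Lclass ` component e" using VLs f(1) by auto
      show "Rclass e \<in> VR" "u (Rclass e) = [e]" using Re ue by auto
      show "insert f T \<subseteq> component e" using TC f(1) by auto
      show "card (insert f T) + 1 = card VR + card (insert (Lclass f) VL)"
        using cardT fT c finT finVL by simp
    next
      fix g assume "g \<in> insert f T"
      then show "Rclass g \<in> VR" "Lclass g \<in> insert (Lclass f) VL" using Tcl c by auto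
    next
      fix r assume "r \<in> VR"
      then show "goodu e (insert f T) (u r)" "Rclass (last (u r)) = r" using Ug goodu_mono[of e T "u r" "insert f T"] by auto
    next
      fix l assume l: "l \<in> insert (Lclass f) VL"
      show "goodu e (insert f T) (v' l)"
      proof (cases "l = Lclass f")
        case True then show ?thesis using goodq v'_def by simp
      next
        case False then show ?thesis using l Vg v'o goodu_mono[of e T "v l" "insert f T"] by auto
      qed
      show "tl (v' l) \<noteq> []"
      proof (cases "l = Lclass f")
        case True then show ?thesis using ufne v'_def q_def by simp
      next
        case False then show ?thesis using l Vg v'o by auto
      qed
      show "last (v' l) \<in> insert f T"
      proof (cases "l = Lclass f")
        case True then show ?thesis using v'_def q_def by simp
      next
        case False then show ?thesis using l Vg v'o by auto
      qed
      show "Lclass (last (v' l)) = l"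
      proof (cases "l = Lclass f")
        case True then show ?thesis using v'_def q_def by simp
      next
        case False then show ?thesis using l Vg v'o by auto
      qed
    next
      fix g assume g: "g \<in> insert f T"
      show "(u (Rclass g) @ [g] @ rev (v' (Lclass g)), [e]) \<in> chain_equiv"
      proof (cases "g = f")
        case True
        have "u (Rclass g) @ [g] @ rev (v' (Lclass g)) = q @ rev q" using True v'_def q_def uf_def by simp
        moreover have "hd q = e" using q_def ufne by simp
        ultimately show ?thesis using ce_cancel2[OF epq] by simp
      next
        case False
        then have "g \<in> T" using g by simp
        then show ?thesis using Lo Tcl v'o by auto
      qed
    qed
    moreover have "card VR + card VL < card VR + card (insert (Lclass f) VL)" using c finVL by simp
    ultimately show ?thesis by blast
  next
    assume c: "Lclass f \<in> VL \<and> Rclass f \<notin> VR"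
    define vf where "vf = v (Lclass f)"
    define q where "q = vf @ [f]"
    have gv: "goodu e T vf" "tl vf \<noteq> []" "last vf \<in> T" "Lclass (last vf) = Lclass f" using Vg c vf_def by auto
    have vfne: "vf \<noteq> []" "ep vf" "hd vf = e" using gv unfolding goodu_def by auto
    have lvi: "last vf \<in> idems" using vfne ep_idems last_in_set by blast
    have Llf: "Lrel (last vf) f" using gv(4) Lclass_eq[OF lvi fi] by simp
    have epq: "ep q" unfolding q_def using ep_app3[OF vfne(2), of "[f]"] Llf fi by simp
    have fT: "f \<notin> T" using Tcl c by blast
    have goodq: "goodu e (insert f T) q"
      unfolding q_def using goodu_snoc[OF gv(1)] epq q_def gv(2) by simp
    define u' where "u' = u(Rclass f := q)"
    have u'o: "r \<in> VR \<Longrightarrow> u' r = u r" for r using c u'_def by auto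
    have "tinv e (insert (Rclass f) VR) VL u' v (insert f T)"
      unfolding tinv_def
    proof (intro conjI ballI)
      show "insert (Rclass f) VR \<subseteq> Rclass ` component e" using VRs f(1) by auto
      show "VL \<subseteq> Lclass ` component e" using VLs .
      show "Rclass e \<in> insert (Rclass f) VR" using Re by auto
      show "u' (Rclass e) = [e]" using Re ue u'o by auto
      show "insert f T \<subseteq> component e" using TC f(1) by auto
      show "card (insert f T) + 1 = card (insert (Rclass f) VR) + card VL"
        using cardT fT c finT finVR by simp
    next
      fix g assume "g \<in> insert f T"
      then show "Rclass g \<in> insert (Rclass f) VR" "Lclass g \<in> VL" using Tcl c by auto
    next
      fix r assume r: "r \<in> insert (Rclass f) VR"
      show "goodu e (insert f T) (u' r)"
      proof (cases "r = Rclass f")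
        case True then show ?thesis using goodq u'_def by simp
      next
        case False then show ?thesis using r Ug u'o goodu_mono[of e T "u r" "insert f T"] by auto
      qed
      show "Rclass (last (u' r)) = r"
      proof (cases "r = Rclass f")
        case True then show ?thesis using u'_def q_def by simp
      next
        case False then show ?thesis using r Ug u'o by auto
      qed
    next
      fix l assume "l \<in> VL"
      then show "goodu e (insert f T) (v l)" "tl (v l) \<noteq> []" "last (v l) \<in> insert f T" "Lclass (last (v l)) = l"
        using Vg goodu_mono[of e T "v l" "insert f T"] by auto
    next
      fix g assume g: "g \<in> insert f T"
      show "(u' (Rclass g) @ [g] @ rev (v (Lclass g)), [e]) \<in> chain_equiv"
      proof (cases "g = f")
        case True
        have "u' (Rclass g) @ [g] @ rev (v (Lclass g)) = q @ rev q" using True u'_def q_def vf_def by simp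
        moreover have "hd q = e" using q_def vfne by simp
        ultimately show ?thesis using ce_cancel2[OF epq] by simp
      next
        case False
        then have "g \<in> T" using g by simp
        then show ?thesis using Lo Tcl u'o by auto
      qed
    qed
    moreover have "card VR + card VL < card (insert (Rclass f) VR) + card VL" using c finVR by simp
    ultimately show ?thesis by blast
  qed
qed

lemma grow:
  assumes fin: "finite (component e)" and e: "e \<in> idems"
  shows "\<exists>u v T. tinv e (Rclass ` component e) (Lclass ` component e) u v T"
proof -
  let ?M = "card (Rclass ` component e) + card (Lclass ` component e)"
  have main: "\<forall>VR VL u v T. tinv e VR VL u v T \<longrightarrow> ?M - (card VR + card VL) = n \<longrightarrow>
      (\<exists>u v T. tinv e (Rclass ` component e) (Lclass ` component e) u v T)" for n
  proof (induction n rule: less_induct)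
    case (less n)
    show ?case
    proof (intro allI impI)
      fix VR VL u v T
      assume I: "tinv e VR VL u v T" and n: "?M - (card VR + card VL) = n"
      show "\<exists>u v T. tinv e (Rclass ` component e) (Lclass ` component e) u v T"
      proof (cases "VR = Rclass ` component e \<and> VL = Lclass ` component e")
        case True then show ?thesis using I by blast
      next
        case False
        then obtain VR' VL' u' v' T' where I2: "tinv e VR' VL' u' v' T'"
          and lt: "card VR + card VL < card VR' + card VL'"
          using grow_step[OF fin I] by blast
        have s1a: "VR' \<subseteq> Rclass ` component e" using I2 unfolding tinv_def by (elim conjE)
        have s1b: "VL' \<subseteq> Lclass ` component e" using I2 unfolding tinv_def by (elim conjE)
        note s1 = s1a s1b
        have "card VR' \<le> card (Rclass ` component e)" "card VL' \<le> card (Lclass ` component e)"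
          using s1 fin by (auto intro: card_mono)
        then have "?M - (card VR' + card VL') < n" using n lt by linarith
        then show ?thesis using less.IH I2 by blast
      qed
    qed
  qed
  have "tinv e {Rclass e} {} (\<lambda>_. [e]) (\<lambda>_. [e]) {}"
    unfolding tinv_def goodu_def using e comp_e[OF e] by auto
  then show ?thesis using main by blast
qed




lemma reduced_word_Cons: "reduced_word (x # w) \<Longrightarrow> reduced_word w"
  unfolding reduced_word_def
proof (intro allI impI)
  fix i assume H: "\<forall>i. Suc i < length (x # w) \<longrightarrow>
       \<not> (snd ((x # w) ! i) = snd ((x # w) ! Suc i) \<and> fst ((x # w) ! i) \<noteq> fst ((x # w) ! Suc i))"
    and i: "Suc i < length w"
  from spec[OF H, of "Suc i"] i
  show "\<not> (snd (w ! i) = snd (w ! Suc i) \<and> fst (w ! i) \<noteq> fst (w ! Suc i))" by simp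
qed

lemma reduced_word_hd: "reduced_word (a # c # w) \<Longrightarrow> \<not> (snd a = snd c \<and> fst a \<noteq> fst c)"
  unfolding reduced_word_def by (drule spec[of _ 0]) simp

lemma rd_map:
  "reduced_word w \<Longrightarrow> (\<forall>x\<in>set w. \<forall>y\<in>set w. h (snd x) = h (snd y) \<longrightarrow> snd x = snd y)
    \<Longrightarrow> rd (map (\<lambda>(b, x). (b, h x)) w)"
proof (induction w)
  case Nil then show ?case by simp
next
  case (Cons a w)
  show ?case
  proof (cases w)
    case Nil then show ?thesis by (cases a) simp
  next
    case (Cons c rest)
    have inj': "\<forall>x\<in>set w. \<forall>y\<in>set w. h (snd x) = h (snd y) \<longrightarrow> snd x = snd y"
      using Cons.prems(2) by (meson list.set_intros(2))
    have IH: "rd (map (\<lambda>(b, x). (b, h x)) w)"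
      using Cons.IH[OF reduced_word_Cons[OF Cons.prems(1)] inj'] .
    have hd: "\<not> (snd a = snd c \<and> fst a \<noteq> fst c)" using reduced_word_hd Cons.prems(1) Cons by blast
    have ac: "a \<in> set (a # w)" "c \<in> set (a # w)" using Cons by auto
    have "(fst c, h (snd c)) \<noteq> flip (fst a, h (snd a))"
    proof
      assume "(fst c, h (snd c)) = flip (fst a, h (snd a))"
      then have 1: "fst c = (\<not> fst a)" and 2: "h (snd c) = h (snd a)" by (auto simp: flip_def)
      from 2 have "snd c = snd a" using Cons.prems(2) ac by blast
      then show False using hd 1 by auto
    qed
    then show ?thesis using IH Cons by (cases a; cases c) simp
  qed
qed

definition Lp :: "('a::semigroup_mult set \<Rightarrow> 'a list) \<Rightarrow> ('a set \<Rightarrow> 'a list) \<Rightarrow> 'a \<Rightarrow> 'a list" where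
  "Lp u v f = u (Rclass f) @ [f] @ rev (v (Lclass f))"

locale tctx =
  fixes e :: "'a::semigroup_mult" and u v T
  assumes e: "e \<in> idems" and fin: "finite (component e)"
    and I: "tinv e (Rclass ` component e) (Lclass ` component e) u v T"
begin

abbreviation "C \<equiv> component e"
abbreviation "N \<equiv> component e - T"
abbreviation "G \<equiv> vertex_group e"

lemma I'1: "u (Rclass e) = [e]" using I unfolding tinv_def by (elim conjE)
lemma I'2: "T \<subseteq> C" using I unfolding tinv_def by (elim conjE)
lemma I'3: "card T + 1 = card (Rclass ` C) + card (Lclass ` C)" using I unfolding tinv_def by (elim conjE)
lemma I'4: "r \<in> Rclass ` C \<Longrightarrow> goodu e T (u r) \<and> Rclass (last (u r)) = r"
proof -
  assume r: "r \<in> Rclass ` C"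
  have "\<forall>r\<in>Rclass ` C. goodu e T (u r) \<and> Rclass (last (u r)) = r" using I unfolding tinv_def by (elim conjE)
  then show ?thesis using r by blast
qed
lemma I'5: "l \<in> Lclass ` C \<Longrightarrow> goodu e T (v l) \<and> tl (v l) \<noteq> [] \<and> last (v l) \<in> T \<and> Lclass (last (v l)) = l"
proof -
  assume l: "l \<in> Lclass ` C"
  have "\<forall>l\<in>Lclass ` C. goodu e T (v l) \<and> tl (v l) \<noteq> [] \<and> last (v l) \<in> T \<and> Lclass (last (v l)) = l"
    using I unfolding tinv_def by (elim conjE)
  then show ?thesis using l by blast
qed
lemma I'6: "f \<in> T \<Longrightarrow> (u (Rclass f) @ [f] @ rev (v (Lclass f)), [e]) \<in> chain_equiv"
proof -
  assume f: "f \<in> T"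
  have "\<forall>f\<in>T. (u (Rclass f) @ [f] @ rev (v (Lclass f)), [e]) \<in> chain_equiv"
    using I unfolding tinv_def by (elim conjE)
  then show ?thesis using f by blast
qed

lemma grp: "group G" using vg_group[OF e] .

lemma ufacts:
  assumes "f \<in> C"
  shows "ep (u (Rclass f))" "hd (u (Rclass f)) = e" "Rrel (last (u (Rclass f))) f"
    "raw N (u (Rclass f)) = []"
proof -
  have g: "goodu e T (u (Rclass f))" "Rclass (last (u (Rclass f))) = Rclass f" using I'4[of "Rclass f"] assms by auto
  then show ep: "ep (u (Rclass f))" and "hd (u (Rclass f)) = e" unfolding goodu_def by auto
  have "last (u (Rclass f)) \<in> idems" using ep ep_idems ep_nonempty last_in_set by blast
  then show "Rrel (last (u (Rclass f))) f" using g(2) Rclass_eq comp_idems[OF assms] by blast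
  show "raw N (u (Rclass f)) = []"
  proof -
    obtain t where t: "u (Rclass f) = e # t" using ep \<open>hd (u (Rclass f)) = e\<close> by (cases "u (Rclass f)") auto
    have st: "set t \<subseteq> T" "t \<noteq> [] \<Longrightarrow> Rrel e (hd t)" using g(1) t unfolding goodu_def by auto
    show ?thesis
    proof (cases t)
      case Nil then show ?thesis using t by simp
    next
      case (Cons h w)
      have "raw N t = []" using st(1) by (intro raw_noN) auto
      moreover have "sw N e h = []" using st(2) Cons by (simp add: sw_def)
      ultimately show ?thesis using t Cons by simp
    qed
  qed
qed

lemma vfacts:
  assumes "f \<in> C"
  shows "ep (v (Lclass f))" "hd (v (Lclass f)) = e" "Lrel (last (v (Lclass f))) f"
    "last (v (Lclass f)) \<in> T" "raw N (v (Lclass f)) = []" "tl (v (Lclass f)) \<noteq> []"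
proof -
  have g: "goodu e T (v (Lclass f))" "Lclass (last (v (Lclass f))) = Lclass f" "last (v (Lclass f)) \<in> T"
     "tl (v (Lclass f)) \<noteq> []"
    using I'5[of "Lclass f"] assms by auto
  then show ep: "ep (v (Lclass f))" and "hd (v (Lclass f)) = e" unfolding goodu_def by auto
  show "last (v (Lclass f)) \<in> T" "tl (v (Lclass f)) \<noteq> []" using g by auto
  have "last (v (Lclass f)) \<in> idems" using ep ep_idems ep_nonempty last_in_set by blast
  then show "Lrel (last (v (Lclass f))) f" using g(2) Lclass_eq comp_idems[OF assms] by blast
  show "raw N (v (Lclass f)) = []"
  proof -
    obtain t where t: "v (Lclass f) = e # t" using ep \<open>hd (v (Lclass f)) = e\<close> by (cases "v (Lclass f)") auto
    have st: "set t \<subseteq> T" "t \<noteq> [] \<Longrightarrow> Rrel e (hd t)" using g(1) t unfolding goodu_def by auto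
    show ?thesis
    proof (cases t)
      case Nil then show ?thesis using t by simp
    next
      case (Cons h w)
      have "raw N t = []" using st(1) by (intro raw_noN) auto
      moreover have "sw N e h = []" using st(2) Cons by (simp add: sw_def)
      ultimately show ?thesis using t Cons by simp
    qed
  qed
qed

lemma Lp_facts:
  assumes "f \<in> C"
  shows "ep (Lp u v f)" "hd (Lp u v f) = e" "last (Lp u v f) = e"
proof -
  note U = ufacts[OF assms] and V = vfacts[OF assms]
  have fi: "f \<in> idems" using comp_idems[OF assms] .
  have A: "ep (u (Rclass f) @ [f])" using ep_app3[OF U(1), of "[f]"] U(3) fi by simp
  have B: "ep (rev (v (Lclass f)))" using ep_rev V(1) by blast
  have C: "rel f (hd (rev (v (Lclass f))))" using Lrel_sym[OF V(3)] by (simp add: hd_rev)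
  have "ep ((u (Rclass f) @ [f]) @ rev (v (Lclass f)))" using ep_app3[OF A B] C by simp
  then show "ep (Lp u v f)" unfolding Lp_def by simp
  show "hd (Lp u v f) = e" unfolding Lp_def using U(2) ep_nonempty[OF U(1)] by simp
  show "last (Lp u v f) = e" unfolding Lp_def using V(2) ep_nonempty[OF V(1)] by (simp add: last_rev)
qed

lemma Lp_tree: "f \<in> T \<Longrightarrow> cls (Lp u v f) = cls [e]"
proof -
  assume "f \<in> T"
  then have c: "(Lp u v f, [e]) \<in> chain_equiv" using I'6[of f] by (simp add: Lp_def)
  then show ?thesis using cls_eq[of "Lp u v f" "[e]"] ce_ep[OF c] by simp
qed

lemma Lp_raw:
  assumes "f \<in> N"
  shows "raw N (Lp u v f) = [(True, f)]" "raw N (rev (Lp u v f)) = [(False, f)]"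
proof -
  have fC: "f \<in> C" "f \<notin> T" using assms by auto
  note U = ufacts[OF fC(1)] and V = vfacts[OF fC(1)]
  obtain u' b where ub: "u (Rclass f) = u' @ [b]" using U(1) ep_nonempty by (metis rev_exhaust)
  define c where "c = last (v (Lclass f))"
  have "rev (v (Lclass f)) \<noteq> []" using ep_nonempty[OF V(1)] by simp
  then obtain c' rest where vr0: "rev (v (Lclass f)) = c' # rest" by (cases "rev (v (Lclass f))") auto
  have "c' = c" unfolding c_def using arg_cong[OF vr0, of hd] by (simp add: hd_rev)
  then have vr: "rev (v (Lclass f)) = c # rest" using vr0 by simp
  have bf: "Rrel b f" using U(3) ub by simp
  have "raw N (u (Rclass f) @ [f]) = raw N (u' @ [b]) @ raw N [b, f]"
    using ub raw_app[of N u' b "[f]"] by simp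
  also have "\<dots> = []" using U(4) ub bf by (simp add: sw_def)
  finally have r1: "raw N (u (Rclass f) @ [f]) = []" .
  have r2: "raw N (c # rest) = []" using vr raw_rev[of N "v (Lclass f)"] V(5) by simp
  have cT: "c \<in> T" using V(4) c_def by simp
  have "\<not> Rrel f c"
  proof
    assume "Rrel f c"
    moreover have "Lrel f c" using V(3) Lrel_sym c_def by blast
    ultimately have "f = c" using RL_eq by blast
    then show False using cT fC by simp
  qed
  then have "sw N f c = [(True, f)]" using assms cT by (simp add: sw_def pos_def neg_def)
  then have r3: "raw N (f # rev (v (Lclass f))) = [(True, f)]" using vr r2 by simp
  have "raw N (Lp u v f) = raw N (u (Rclass f) @ [f]) @ raw N (f # rev (v (Lclass f)))"
    unfolding Lp_def using raw_app[of N "u (Rclass f)" f "rev (v (Lclass f))"] by simp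
  then show "raw N (Lp u v f) = [(True, f)]" using r1 r3 by simp
  then show "raw N (rev (Lp u v f)) = [(False, f)]" using raw_rev[of N "Lp u v f"] by (simp add: flip_def)
qed

definition B where "B = (\<lambda>f. cls (Lp u v f)) ` N"

lemma cls_closed: "ep p \<Longrightarrow> hd p = e \<Longrightarrow> last p = e \<Longrightarrow> cls p \<in> carrier G"
  by (auto simp: vg_carrier echains_iff)

lemma B_carrier: "B \<subseteq> carrier G"
  unfolding B_def using Lp_facts cls_closed by auto

lemma Lp_gen: "f \<in> C \<Longrightarrow> cls (Lp u v f) \<in> generate G B"
proof -
  assume f: "f \<in> C"
  show ?thesis
  proof (cases "f \<in> T")
    case True
    then have "cls (Lp u v f) = monoid.one G" using Lp_tree[OF True] by (simp add: vg_one)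
    then show ?thesis using generate.one[of G B] by simp
  next
    case False
    then have "cls (Lp u v f) \<in> B" unfolding B_def using f by auto
    then show ?thesis by (rule generate.incl)
  qed
qed

lemma mult_cls: "ep p \<Longrightarrow> ep q \<Longrightarrow> last p = hd q \<Longrightarrow> monoid.mult G (cls p) (cls q) = cls (p @ tl q)"
  using chain_mult_cls by (simp add: vg_mult)

lemma K_gen:
  assumes f: "f \<in> C" and g: "g \<in> C" and fg: "rel f g"
  shows "cls (u (Rclass f) @ [f, g] @ rev (u (Rclass g))) \<in> generate G B"
proof -
  have fi: "f \<in> idems" and gi: "g \<in> idems" using f g comp_idems by auto
  note Uf = ufacts[OF f] and Ug = ufacts[OF g]
  have epK: "ep (u (Rclass f) @ [f, g] @ rev (u (Rclass g)))"
  proof -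
    have A0: "ep (u (Rclass f) @ [f])" using ep_app3[OF Uf(1), of "[f]"] Uf(3) fi by simp
    have A: "ep ((u (Rclass f) @ [f]) @ [g])" using ep_app3[OF A0, of "[g]"] fg gi by simp
    have B: "ep (rev (u (Rclass g)))" using ep_rev Ug(1) by blast
    have C: "rel g (hd (rev (u (Rclass g))))" using Rrel_sym[OF Ug(3)] by (simp add: hd_rev)
    have "ep (((u (Rclass f) @ [f]) @ [g]) @ rev (u (Rclass g)))" using ep_app3[OF A B] C by simp
    then show ?thesis by simp
  qed
  show ?thesis
  proof (cases "Rrel f g")
    case True
    then have same: "Rclass g = Rclass f" using Rclass_eq[OF gi fi] Rrel_sym[OF True] by simp
    obtain u' b where ub: "u (Rclass f) = u' @ [b]" using Uf(1) ep_nonempty by (metis rev_exhaust)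
    have bf: "Rrel b f" using Uf(3) ub by simp
    have bg: "Rrel b g" using Rrel_trans[OF bf True] .
    have K: "u (Rclass f) @ [f, g] @ rev (u (Rclass g)) = u' @ [b, f, g] @ (b # rev u')" using ub same by simp
    have s1: "(u' @ [b, f, g] @ (b # rev u'), u' @ [b, g] @ (b # rev u')) \<in> chain_equiv"
      using ce_del3[of u' b f g "b # rev u'"] epK K bf True by simp
    have e2: "ep (u' @ [b, g, b] @ rev u')" using ce_ep[OF s1] by simp
    have s2: "(u' @ [b, g, b] @ rev u', u' @ [b, b] @ rev u') \<in> chain_equiv"
      using ce_del3[OF e2] bg Rrel_sym by blast
    have s3: "(u' @ [b, b] @ rev u', u' @ [b] @ rev u') \<in> chain_equiv"
      using ce_dup s2 ce_ep by blast
    have s4: "(u' @ [b] @ rev u', [e]) \<in> chain_equiv"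
      using ce_cancel[OF Uf(1)] ub Uf(2) by simp
    have s1': "(u' @ [b, f, g] @ (b # rev u'), u' @ [b, g, b] @ rev u') \<in> chain_equiv" using s1 by simp
    have "(u' @ [b, f, g] @ (b # rev u'), [e]) \<in> chain_equiv"
      using ce_trans[OF ce_trans[OF ce_trans[OF s1' s2] s3] s4] .
    then have c: "(u (Rclass f) @ [f, g] @ rev (u (Rclass g)), [e]) \<in> chain_equiv" using K by simp
    then have "cls (u (Rclass f) @ [f, g] @ rev (u (Rclass g))) = monoid.one G"
      using cls_eq[of "u (Rclass f) @ [f, g] @ rev (u (Rclass g))" "[e]"] ce_ep[OF c] by (simp add: vg_one)
    then show ?thesis using generate.one[of G B] by simp
  next
    case False
    then have Lfg: "Lrel f g" using fg by blast
    then have same: "Lclass g = Lclass f" using Lclass_eq[OF gi fi] Lrel_sym[OF Lfg] by simp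
    note Vf = vfacts[OF f]
    define vf where "vf = v (Lclass f)"
    define c where "c = last vf"
    have fc: "Lrel f c" "Lrel c g" using Vf(3) Lrel_sym Lrel_trans[OF _ Lfg] unfolding c_def vf_def by blast+
    have revg0: "rev (Lp u v g) = v (Lclass g) @ [g] @ rev (u (Rclass g))" by (simp add: Lp_def)
    have revg: "rev (Lp u v g) = vf @ [g] @ rev (u (Rclass g))" using revg0 unfolding vf_def same .
    have vfne: "vf \<noteq> []" using ep_nonempty[OF Vf(1)] vf_def by simp
    have prod: "Lp u v f @ tl (rev (Lp u v g)) = (u (Rclass f) @ [f]) @ (rev vf @ tl vf) @ ([g] @ rev (u (Rclass g)))"
    proof -
      have "Lp u v f = (u (Rclass f) @ [f]) @ rev vf" by (simp add: Lp_def vf_def)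
      moreover have "tl (rev (Lp u v g)) = tl vf @ [g] @ rev (u (Rclass g))" using revg vfne by simp
      ultimately show ?thesis by simp
    qed
    have Lg: "ep (rev (Lp u v g))" "hd (rev (Lp u v g)) = e" "last (rev (Lp u v g)) = e"
      using Lp_facts[OF g] ep_rev by (auto simp: hd_rev last_rev)
    have ep1: "ep (Lp u v f @ tl (rev (Lp u v g)))" using ep_join[OF Lp_facts(1)[OF f] Lg(1)] Lp_facts(3)[OF f] Lg(2) by simp
    have c3: "(rev vf @ tl vf, [c]) \<in> chain_equiv" using ce_cancel3 Vf(1) unfolding c_def vf_def by blast
    have ep1': "ep ((u (Rclass f) @ [f]) @ (rev vf @ tl vf) @ ([g] @ rev (u (Rclass g))))"
      using ep1 unfolding prod .
    have s1: "(Lp u v f @ tl (rev (Lp u v g)), u (Rclass f) @ [f, c, g] @ rev (u (Rclass g))) \<in> chain_equiv"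
      using ce_ctx[OF c3 ep1'] unfolding prod by simp
    have ep2: "ep (u (Rclass f) @ [f, c, g] @ rev (u (Rclass g)))" using ce_ep[OF s1] by blast
    have s2: "(u (Rclass f) @ [f, c, g] @ rev (u (Rclass g)), u (Rclass f) @ [f, g] @ rev (u (Rclass g))) \<in> chain_equiv"
      using ce_del3[OF ep2] fc by blast
    have s12: "(Lp u v f @ tl (rev (Lp u v g)), u (Rclass f) @ [f, g] @ rev (u (Rclass g))) \<in> chain_equiv"
      using ce_trans[OF s1 s2] .
    then have "cls (u (Rclass f) @ [f, g] @ rev (u (Rclass g))) = cls (Lp u v f @ tl (rev (Lp u v g)))"
      using cls_eq[of "Lp u v f @ tl (rev (Lp u v g))" "u (Rclass f) @ [f, g] @ rev (u (Rclass g))"] ce_ep[OF s12] by simp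
    also have "\<dots> = monoid.mult G (cls (Lp u v f)) (cls (rev (Lp u v g)))"
      using mult_cls[OF Lp_facts(1)[OF f] Lg(1)] Lp_facts(3)[OF f] Lg(2) by simp
    also have "cls (rev (Lp u v g)) = m_inv G (cls (Lp u v g))"
      using vg_inv[OF e Lp_facts[OF g]] by simp
    finally have eq: "cls (u (Rclass f) @ [f, g] @ rev (u (Rclass g))) = monoid.mult G (cls (Lp u v f)) (m_inv G (cls (Lp u v g)))" .
    have "m_inv G (cls (Lp u v g)) \<in> generate G B"
      using group.generate_m_inv_closed[OF grp B_carrier Lp_gen[OF g]] .
    then show ?thesis using eq generate.eng[OF Lp_gen[OF f] \<open>m_inv G (cls (Lp u v g)) \<in> generate G B\<close>] by simp
  qed
qed

lemma Z_gen: "ep q \<Longrightarrow> hd q = e \<Longrightarrow> cls (q @ rev (u (Rclass (last q)))) \<in> generate G B"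
proof (induction q rule: rev_induct)
  case Nil then show ?case by simp
next
  case (snoc g q)
  show ?case
  proof (cases "q = []")
    case True
    then have "g = e" using snoc by simp
    then have Z: "(q @ [g]) @ rev (u (Rclass (last (q @ [g])))) = [] @ [e, e] @ []" using True I'1 by simp
    have "ep ([] @ [e, e] @ [])" using e Rrel_refl[OF e] by simp
    then have c: "([] @ [e, e] @ [], [] @ [e] @ []) \<in> chain_equiv" by (rule ce_dup)
    then have "cls ([] @ [e, e] @ []) = cls ([] @ [e] @ [])" using cls_eq[of "[] @ [e, e] @ []" "[] @ [e] @ []"] ce_ep[OF c] by blast
    then have "cls ((q @ [g]) @ rev (u (Rclass (last (q @ [g]))))) = monoid.one G" using Z by (simp add: vg_one)
    then show ?thesis using generate.one[of G B] by simp
  next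
    case False
    define f where "f = last q"
    have q: "ep q" "g \<in> idems" "rel f g" "hd q = e" using snoc(2,3) False ep_snoc[of q g] f_def by auto
    have fC: "f \<in> C" using comp_path[OF q(1) q(4)] f_def by simp
    have gC: "g \<in> C" using comp_path[OF snoc(2,3)] by simp
    note Uf = ufacts[OF fC] and Ug = ufacts[OF gC]
    have IH: "cls (q @ rev (u (Rclass f))) \<in> generate G B" using snoc(1)[OF q(1) q(4)] f_def by simp
    have Kg: "cls (u (Rclass f) @ [f, g] @ rev (u (Rclass g))) \<in> generate G B" using K_gen[OF fC gC q(3)] .
    have epZ: "ep (q @ rev (u (Rclass f)))"
      using ep_app3[OF q(1) ep_rev[OF Uf(1)]] Rrel_sym[OF Uf(3)] f_def by (simp add: hd_rev)
    have epK: "ep (u (Rclass f) @ [f, g] @ rev (u (Rclass g)))"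
    proof -
      have A0: "ep (u (Rclass f) @ [f])" using ep_app3[OF Uf(1), of "[f]"] Uf(3) comp_idems[OF fC] by simp
      have A: "ep ((u (Rclass f) @ [f]) @ [g])" using ep_app3[OF A0, of "[g]"] q(2,3) by simp
      have B: "ep (rev (u (Rclass g)))" using ep_rev Ug(1) by blast
      have C: "rel g (hd (rev (u (Rclass g))))" using Rrel_sym[OF Ug(3)] by (simp add: hd_rev)
      have "ep (((u (Rclass f) @ [f]) @ [g]) @ rev (u (Rclass g)))" using ep_app3[OF A B] C by simp
      then show ?thesis by simp
    qed
    have lz: "last (q @ rev (u (Rclass f))) = e" using Uf(2) ep_nonempty[OF Uf(1)] by (simp add: last_rev)
    have hk: "hd (u (Rclass f) @ [f, g] @ rev (u (Rclass g))) = e" using Uf(2) ep_nonempty[OF Uf(1)] by simp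
    have M: "monoid.mult G (cls (q @ rev (u (Rclass f)))) (cls (u (Rclass f) @ [f, g] @ rev (u (Rclass g))))
             = cls ((q @ rev (u (Rclass f))) @ tl (u (Rclass f) @ [f, g] @ rev (u (Rclass g))))"
      using mult_cls[OF epZ epK] lz hk by simp
    define b where "b = last (u (Rclass f))"
    have ufne: "u (Rclass f) \<noteq> []" using Uf(1) ep_nonempty by blast
    have L1: "(q @ rev (u (Rclass f))) @ tl (u (Rclass f) @ [f, g] @ rev (u (Rclass g)))
             = q @ (rev (u (Rclass f)) @ tl (u (Rclass f))) @ ([f, g] @ rev (u (Rclass g)))"
      using ufne by simp
    have ep1: "ep (q @ (rev (u (Rclass f)) @ tl (u (Rclass f))) @ ([f, g] @ rev (u (Rclass g))))"
      using ep_join[OF epZ epK] lz hk L1 by simp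
    have "(rev (u (Rclass f)) @ tl (u (Rclass f)), [b]) \<in> chain_equiv" using ce_cancel3[OF Uf(1)] b_def by simp
    then have s1: "(q @ (rev (u (Rclass f)) @ tl (u (Rclass f))) @ ([f, g] @ rev (u (Rclass g))),
                    q @ [b] @ ([f, g] @ rev (u (Rclass g)))) \<in> chain_equiv"
      using ce_ctx ep1 by blast
    obtain q' where q': "q = q' @ [f]" using False f_def by (metis append_butlast_last_id)
    have L2: "q @ [b] @ ([f, g] @ rev (u (Rclass g))) = q' @ [f, b, f] @ (g # rev (u (Rclass g)))"
      using q' by simp
    have fb: "Rrel f b" using Uf(3) Rrel_sym b_def by blast
    have ep2: "ep (q' @ [f, b, f] @ (g # rev (u (Rclass g))))" using ce_ep[OF s1] L2 by simp
    have s2: "(q' @ [f, b, f] @ (g # rev (u (Rclass g))), q' @ [f, f] @ (g # rev (u (Rclass g)))) \<in> chain_equiv"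
      using ce_del3[OF ep2] fb Rrel_sym by blast
    have s3: "(q' @ [f, f] @ (g # rev (u (Rclass g))), q' @ [f] @ (g # rev (u (Rclass g)))) \<in> chain_equiv"
      using ce_dup s2 ce_ep by blast
    have L3: "q' @ [f] @ (g # rev (u (Rclass g))) = (q @ [g]) @ rev (u (Rclass (last (q @ [g]))))"
      using q' by simp
    have s1': "(q @ (rev (u (Rclass f)) @ tl (u (Rclass f))) @ ([f, g] @ rev (u (Rclass g))),
                    q' @ [f, b, f] @ (g # rev (u (Rclass g)))) \<in> chain_equiv" using s1 unfolding L2 .
    have s3': "(q' @ [f, f] @ (g # rev (u (Rclass g))), (q @ [g]) @ rev (u (Rclass (last (q @ [g]))))) \<in> chain_equiv"
      using s3 unfolding L3 .
    have c: "((q @ rev (u (Rclass f))) @ tl (u (Rclass f) @ [f, g] @ rev (u (Rclass g))),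
           (q @ [g]) @ rev (u (Rclass (last (q @ [g]))))) \<in> chain_equiv"
      using ce_trans[OF ce_trans[OF s1' s2] s3'] L1 by simp
    then have "cls ((q @ [g]) @ rev (u (Rclass (last (q @ [g]))))) =
               monoid.mult G (cls (q @ rev (u (Rclass f)))) (cls (u (Rclass f) @ [f, g] @ rev (u (Rclass g))))"
      using M cls_eq[of "(q @ rev (u (Rclass f))) @ tl (u (Rclass f) @ [f, g] @ rev (u (Rclass g)))"
         "(q @ [g]) @ rev (u (Rclass (last (q @ [g]))))"] ce_ep[OF c] by simp
    then show ?thesis using generate.eng[OF IH Kg] by simp
  qed
qed

lemma gen_all: "generate G B = carrier G"
proof
  show "generate G B \<subseteq> carrier G" using group.generate_incl[OF grp B_carrier] .
  show "carrier G \<subseteq> generate G B"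
  proof
    fix x assume "x \<in> carrier G"
    then obtain p where p: "ep p" "hd p = e" "last p = e" "x = cls p" by (auto simp: vg_carrier echains_iff)
    have Z: "cls (p @ rev (u (Rclass (last p)))) \<in> generate G B" using Z_gen p by blast
    obtain p' where p': "p = p' @ [e]" using p ep_nonempty by (metis append_butlast_last_id)
    have "p @ rev (u (Rclass (last p))) = p' @ [e, e] @ []" using p p' I'1 by simp
    moreover have "ep (p' @ [e, e] @ [])" using ep_app3[OF p(1), of "[e]"] p e Rrel_refl[OF e] p' by simp
    ultimately have c: "(p @ rev (u (Rclass (last p))), p) \<in> chain_equiv" using ce_dup[of p' e "[]"] p' by simp
    then have "cls (p @ rev (u (Rclass (last p)))) = cls p" using cls_eq[of "p @ rev (u (Rclass (last p)))" p] ce_ep[OF c] by blast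
    then show "x \<in> generate G B" using Z p by simp
  qed
qed

lemma Lp_inj: "f \<in> N \<Longrightarrow> g \<in> N \<Longrightarrow> cls (Lp u v f) = cls (Lp u v g) \<Longrightarrow> f = g"
proof -
  assume f: "f \<in> N" and g: "g \<in> N" and eq: "cls (Lp u v f) = cls (Lp u v g)"
  have "(Lp u v f, Lp u v g) \<in> chain_equiv" using eq cls_eq Lp_facts f g by blast
  then have "red (raw N (Lp u v f)) = red (raw N (Lp u v g))" by (rule ce_red)
  then show "f = g" using Lp_raw(1)[OF f] Lp_raw(1)[OF g] by simp
qed

definition iota where "iota x = (SOME f. f \<in> N \<and> x = cls (Lp u v f))"

lemma iota: "x \<in> B \<Longrightarrow> iota x \<in> N \<and> x = cls (Lp u v (iota x))"
  unfolding iota_def B_def by (rule someI_ex) auto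

lemma word_path:
  "set (map snd w) \<subseteq> B \<Longrightarrow> \<exists>P. ep P \<and> hd P = e \<and> last P = e \<and> eval_word G w = cls P \<and>
      raw N P = map (\<lambda>(b, x). (b, iota x)) w"
proof (induction w)
  case Nil
  have "eval_word G [] = cls [e]" by (simp add: vg_one)
  then show ?case using e by (intro exI[of _ "[e]"]) simp
next
  case (Cons a w)
  obtain b x where a: "a = (b, x)" by (cases a)
  have xB: "x \<in> B" using Cons(2) a by simp
  then obtain P where P: "ep P" "hd P = e" "last P = e" "eval_word G w = cls P" "raw N P = map (\<lambda>(b, x). (b, iota x)) w"
    using Cons by auto
  define f where "f = iota x"
  have f: "f \<in> N" "x = cls (Lp u v f)" using iota[OF xB] f_def by auto
  define l where "l = (if b then Lp u v f else rev (Lp u v f))"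
  have fC: "f \<in> C" using f by simp
  have l: "ep l" "hd l = e" "last l = e" using Lp_facts[OF fC] ep_rev unfolding l_def by (auto simp: hd_rev last_rev)
  have lraw: "raw N l = [(b, f)]" using Lp_raw[OF f(1)] unfolding l_def by simp
  have lcls: "cls l = (if b then x else m_inv G x)"
    using vg_inv[OF e Lp_facts[OF fC]] f(2) unfolding l_def by simp
  have "eval_word G (a # w) = monoid.mult G (cls l) (cls P)" using a lcls P(4) by simp
  also have "\<dots> = cls (l @ tl P)" using mult_cls[OF l(1) P(1)] l(3) P(2) by simp
  finally have ev: "eval_word G (a # w) = cls (l @ tl P)" .
  have "ep (l @ tl P)" using ep_join[OF l(1) P(1)] l(3) P(2) by simp
  moreover have "hd (l @ tl P) = e" using l(2) ep_nonempty[OF l(1)] by simp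
  moreover have lj: "last l = hd P" using l(3) P(2) by (rule trans[OF _ sym])
  moreover have "last (l @ tl P) = e"
    using trans[OF last_join[OF ep_nonempty[OF l(1)] ep_nonempty[OF P(1)] lj] P(3)] .
  moreover have "raw N (l @ tl P) = map (\<lambda>(b, x). (b, iota x)) (a # w)"
  proof -
    have "raw N (l @ tl P) = raw N l @ raw N P"
      using raw_join[OF ep_nonempty[OF l(1)] ep_nonempty[OF P(1)] lj] .
    then show ?thesis using lraw P(5) a f_def by simp
  qed
  ultimately show ?case using ev by blast
qed

lemma free_words:
  assumes "w \<noteq> []" "set (map snd w) \<subseteq> B" "reduced_word w"
  shows "eval_word G w \<noteq> monoid.one G"
proof
  assume ev: "eval_word G w = monoid.one G"
  obtain P where P: "ep P" "hd P = e" "last P = e" "eval_word G w = cls P" "raw N P = map (\<lambda>(b, x). (b, iota x)) w"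
    using word_path[OF assms(2)] by blast
  have "cls P = cls [e]" using ev P(4) by (simp add: vg_one)
  moreover have "ep [e]" using e by simp
  ultimately have "(P, [e]) \<in> chain_equiv" using cls_eq[OF P(1), of "[e]"] by simp
  then have "red (raw N P) = red (raw N [e])" by (rule ce_red)
  then have r0: "red (map (\<lambda>(b, x). (b, iota x)) w) = []" using P(5) by simp
  have "\<forall>x\<in>set w. \<forall>y\<in>set w. iota (snd x) = iota (snd y) \<longrightarrow> snd x = snd y"
  proof (intro ballI impI)
    fix x y assume "x \<in> set w" "y \<in> set w" "iota (snd x) = iota (snd y)"
    moreover have "snd x \<in> B" "snd y \<in> B" using assms(2) \<open>x \<in> set w\<close> \<open>y \<in> set w\<close> by auto
    ultimately show "snd x = snd y" using iota[of "snd x"] iota[of "snd y"] by simp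
  qed
  then have rdm: "rd (map (\<lambda>(b, x). (b, iota x)) w)" using rd_map assms(3) by blast
  have "map (\<lambda>(b, x). (b, iota x)) w = []" using r0 red_rd[OF rdm] by simp
  then show False using assms(1) by simp
qed

lemma card_B: "card B = card N" "finite B"
proof -
  have "inj_on (\<lambda>f. cls (Lp u v f)) N" using Lp_inj by (auto intro: inj_onI)
  moreover have "finite N" using fin by simp
  ultimately show "card B = card N" "finite B" unfolding B_def by (auto simp: card_image)
qed

lemma basis: "free_basis G B"
  unfolding free_basis_def
proof (intro conjI allI impI)
  show "B \<subseteq> carrier G" using B_carrier .
  show "generate G B = carrier G" using gen_all .
  fix w assume "w \<noteq> [] \<and> set (map snd w) \<subseteq> B \<and> reduced_word w"
  then show "eval_word G w \<noteq> monoid.one G" using free_words by blast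
qed

lemma result: "free_group_of_rank G (card N)"
  unfolding free_group_of_rank_def
proof (intro conjI)
  show "group G" using grp .
  show "\<exists>B'. finite B' \<and> card B' = card N \<and> free_basis G B'"
    using card_B basis by blast
qed

end


theorem mainTheorem6:
  fixes e :: "'a::semigroup_mult"
  assumes "regular_semigroup TYPE('a)"
    and "e \<in> idems"
    and "finite (component e)"
    and "card (component e) = k"
    and "card (Rclass ` component e) = m"
    and "card (Lclass ` component e) = n"
  shows "\<exists>r::nat. int r = int k - (int m + int n) + 1 \<and> free_group_of_rank (vertex_group e) r"
proof -
  obtain u v T where I: "tinv e (Rclass ` component e) (Lclass ` component e) u v T"
    using grow[OF assms(3) assms(2)] by blast
  interpret tctx e u v T using assms(2,3) I by unfold_locales
  have TC: "T \<subseteq> component e" using I'2 .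
  have fT: "finite T" using finite_subset[OF TC assms(3)] .
  have cN: "card (component e - T) = k - card T" using card_Diff_subset[OF fT TC] assms(4) by simp
  have le: "card T \<le> k" using card_mono[OF assms(3) TC] assms(4) by simp
  have ct: "card T + 1 = m + n" using I'3 assms(5,6) by simp
  have 1: "int (card (component e - T)) = int k - int (card T)" using cN le by (simp add: of_nat_diff)
  have 2: "int (card T) + 1 = int m + int n" using arg_cong[OF ct, of int] by simp
  have "int (card (component e - T)) = int k - (int m + int n) + 1" using 1 2 by linarith
  then show ?thesis using result by blast
qed

end
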